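(* Let $X\ge y\ge2$. Let $\boldsymbol L$ be a primitive integral system of $k$ affine linear forms in $l$ variables, and let $\boldsymbol f=(f_1,\dots,f_k)$ be a vector of 1-bounded multiplicative functions such that $f_j(p^\mu)=1$ for every prime power $p^\mu\le y$ and every $j$. Then, as $y\to\infty$, $$\prod_{y<p\le X}M_p(\boldsymbol f,\boldsymbol L)=\left(1+O_k\Big(\frac1{\log y}\Big)\right)\left(\prod_{1\le j\le k}\mathfrak P(f_j;X)+O\big(y^{-1+o(1)}\big)\right).$$
   Context: 1-bounded means values in the closed unit disc. An integral affine linear form is $L(\boldsymbol n)=\alpha_0+\sum_{r=1}^l\alpha_rn_r$ with $(\alpha_0,\dots,\alpha_l)\in\mathbb{N}_0^{l+1}$; a system $(L_1,\dots,L_k)$ is primitive if for each $j$ the gcd of the non-constant coefficients of $L_j$ is $1$ and the forms are pairwise linearly independent. For multiplicative $f$ and prime $p$, $f_p$ agrees with $f$ on powers of $p$ and equals $1$ on powers of other primes; $M_p(\boldsymbol f,\boldsymbol L)=\lim_{x\to\infty}x^{-l}\sum_{\boldsymbol n\in([1,x]\cap\mathbb{N})^l}\prod_jf_{j,p}(L_j(\boldsymbol n))$. $\mathfrak P(f;X)=\prod_{p\le X}(1-\frac1p)(1+\sum_{k\ge1}\frac{f(p^k)}{p^k})$. *)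

theory Defs
  imports "HOL-Analysis.Analysis" "HOL-Computational_Algebra.Primes"
begin

definition multiplicative :: "(nat \<Rightarrow> complex) \<Rightarrow> bool" where
  "multiplicative f \<longleftrightarrow> f 1 = 1 \<and>
     (\<forall>a b. a \<ge> 1 \<longrightarrow> b \<ge> 1 \<longrightarrow> coprime a b \<longrightarrow> f (a * b) = f a * f b)"

definition one_bounded :: "(nat \<Rightarrow> complex) \<Rightarrow> bool" where
  "one_bounded f \<longleftrightarrow> (\<forall>n\<ge>1. norm (f n) \<le> 1)"

text \<open>Local factor f_p: agrees with f on powers of p, equals 1 on powers of other primes
  (the multiplicative function n \<mapsto> f(p^{v_p(n)})).\<close>
definition local_part :: "(nat \<Rightarrow> complex) \<Rightarrow> nat \<Rightarrow> nat \<Rightarrow> complex" where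
  "local_part f p n = f (p ^ multiplicity p n)"

text \<open>A system of k affine forms in l variables is given by coefficients
  \<alpha> j r (j < k, 0 \<le> r \<le> l); \<alpha> j 0 is the constant term.
  The variables n are indexed by 1..l.\<close>
definition eval_form :: "(nat \<Rightarrow> nat \<Rightarrow> nat) \<Rightarrow> nat \<Rightarrow> nat \<Rightarrow> (nat \<Rightarrow> nat) \<Rightarrow> nat" where
  "eval_form \<alpha> l j n = \<alpha> j 0 + (\<Sum>r=1..l. \<alpha> j r * n r)"

definition primitive_system :: "nat \<Rightarrow> nat \<Rightarrow> (nat \<Rightarrow> nat \<Rightarrow> nat) \<Rightarrow> bool" where
  "primitive_system k l \<alpha> \<longleftrightarrow>
     (\<forall>j<k. Gcd (\<alpha> j ` {1..l}) = 1) \<and>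
     (\<forall>i<k. \<forall>j<k. i \<noteq> j \<longrightarrow>
        (\<forall>a b :: real. (\<forall>r\<in>{0..l}. a * real (\<alpha> i r) + b * real (\<alpha> j r) = 0)
            \<longrightarrow> a = 0 \<and> b = 0))"

definition M_p :: "nat \<Rightarrow> nat \<Rightarrow> (nat \<Rightarrow> nat \<Rightarrow> complex) \<Rightarrow> (nat \<Rightarrow> nat \<Rightarrow> nat) \<Rightarrow> nat \<Rightarrow> complex" where
  "M_p k l f \<alpha> p = Lim at_top (\<lambda>x::real.
      complex_of_real (x powr (- real l)) *
      (\<Sum>n\<in>PiE {1..l} (\<lambda>_. {1..nat \<lfloor>x\<rfloor>}).
          \<Prod>j<k. local_part (f j) p (eval_form \<alpha> l j n)))"

definition Pfrak :: "(nat \<Rightarrow> complex) \<Rightarrow> real \<Rightarrow> complex" where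
  "Pfrak f X = (\<Prod>p\<in>{p. prime p \<and> real p \<le> X}.
      (1 - 1 / of_nat p) * (1 + (\<Sum>i. f (p ^ Suc i) / of_nat (p ^ Suc i))))"

end

theory Submission
  imports Defs "HOL-Real_Asymp.Real_Asymp"
begin

definition box :: "nat \<Rightarrow> nat \<Rightarrow> (nat \<Rightarrow> nat) set" where
  "box l N = PiE {1..l} (\<lambda>_. {1..N})"

lemma finite_box[simp]: "finite (box l N)"
  unfolding box_def by (auto intro: finite_PiE)

lemma card_box: "card (box l N) = N ^ l"
  unfolding box_def by (simp add: card_PiE)

lemma eval_form_diff1:
  assumes r0: "r0 \<in> {1..l}" and eq: "\<And>r. r \<in> {1..l} - {r0} \<Longrightarrow> n r = n' r"
  shows "int (eval_form \<alpha> l j n) - int (eval_form \<alpha> l j n') =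
     int (\<alpha> j r0) * (int (n r0) - int (n' r0))"
proof -
  have s: "\<And>m. (\<Sum>r=1..l. \<alpha> j r * m r) = \<alpha> j r0 * m r0 + (\<Sum>r\<in>{1..l}-{r0}. \<alpha> j r * m r)"
    using r0 by (subst sum.remove[of _ r0]) auto
  have "(\<Sum>r\<in>{1..l}-{r0}. \<alpha> j r * n r) = (\<Sum>r\<in>{1..l}-{r0}. \<alpha> j r * n' r)"
    using eq by (intro sum.cong) auto
  then show ?thesis unfolding eval_form_def s by (simp add: algebra_simps)
qed

lemma eval_form_diff2:
  assumes r: "r \<in> {1..l}" and s: "s \<in> {1..l}" and rs: "r \<noteq> s"
    and eq: "\<And>t. t \<in> {1..l} - {r, s} \<Longrightarrow> n t = n' t"
  shows "int (eval_form \<alpha> l j n) - int (eval_form \<alpha> l j n') =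
     int (\<alpha> j r) * (int (n r) - int (n' r)) + int (\<alpha> j s) * (int (n s) - int (n' s))"
proof -
  have sp: "\<And>m. (\<Sum>t=1..l. \<alpha> j t * m t) = \<alpha> j r * m r + \<alpha> j s * m s + (\<Sum>t\<in>{1..l}-{r,s}. \<alpha> j t * m t)"
  proof -
    fix m
    have "(\<Sum>t=1..l. \<alpha> j t * m t) = \<alpha> j r * m r + (\<Sum>t\<in>{1..l}-{r}. \<alpha> j t * m t)"
      using r by (subst sum.remove[of _ r]) auto
    also have "(\<Sum>t\<in>{1..l}-{r}. \<alpha> j t * m t) = \<alpha> j s * m s + (\<Sum>t\<in>{1..l}-{r}-{s}. \<alpha> j t * m t)"
      using s rs by (subst sum.remove[of _ s]) auto
    also have "{1..l}-{r}-{s} = {1..l} - {r,s}" by auto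
    finally show "(\<Sum>t=1..l. \<alpha> j t * m t) = \<alpha> j r * m r + \<alpha> j s * m s + (\<Sum>t\<in>{1..l}-{r,s}. \<alpha> j t * m t)"
      by simp
  qed
  have "(\<Sum>t\<in>{1..l}-{r,s}. \<alpha> j t * n t) = (\<Sum>t\<in>{1..l}-{r,s}. \<alpha> j t * n' t)"
    using eq by (intro sum.cong) auto
  then show ?thesis unfolding eval_form_def sp by (simp add: algebra_simps)
qed

lemma nat_eq_from_mod_div:
  fixes a b q :: nat
  assumes "int q dvd int a - int b" "a div q = b div q"
  shows "a = b"
proof -
  have "int a mod int q = int b mod int q" using assms(1) by (simp add: mod_eq_dvd_iff)
  then have "a mod q = b mod q" by (metis of_nat_eq_iff zmod_int)
  then show ?thesis using assms(2) by (metis div_mult_mod_eq)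
qed

lemma box_ext:
  assumes "n \<in> box l N" "n' \<in> box l N" "\<And>r. r \<in> {1..l} \<Longrightarrow> n r = n' r"
  shows "n = n'"
  using assms unfolding box_def by (metis PiE_ext)

lemma card_PiE_minus:
  assumes "J \<subseteq> {1..l}"
  shows "card (PiE ({1..l} - J) (\<lambda>_. {1..N::nat})) = N ^ (l - card J)"
  using assms by (simp add: card_PiE card_Diff_subset finite_subset)

lemma card_mod_le:
  fixes q N b :: nat assumes q: "q > 0"
  shows "card {t\<in>{1..N}. t mod q = b} \<le> N div q + 1"
proof -
  have "inj_on (\<lambda>t. t div q) {t\<in>{1..N}. t mod q = b}"
  proof (rule inj_onI)
    fix t t' assume t: "t \<in> {t\<in>{1..N}. t mod q = b}" and t': "t' \<in> {t\<in>{1..N}. t mod q = b}"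
      and e: "t div q = t' div q"
    have "t = q * (t div q) + t mod q" by simp
    also have "\<dots> = q * (t' div q) + t' mod q" using t t' e by simp
    also have "\<dots> = t'" by simp
    finally show "t = t'" .
  qed
  moreover have "(\<lambda>t. t div q) ` {t\<in>{1..N}. t mod q = b} \<subseteq> {0..N div q}"
    by (auto intro: div_le_mono)
  ultimately have "card {t\<in>{1..N}. t mod q = b} \<le> card {0..N div q}"
    by (intro card_inj_on_le) auto
  then show ?thesis by simp
qed

lemma card_mod_ge:
  fixes q N b :: nat assumes q: "q > 0" and b: "b < q"
  shows "N div q - 1 \<le> card {t\<in>{1..N}. t mod q = b}"
proof -
  have "inj_on (\<lambda>i. b + q * i) {1..<N div q}" using q by (intro inj_onI) auto
  moreover have "(\<lambda>i. b + q * i) ` {1..<N div q} \<subseteq> {t\<in>{1..N}. t mod q = b}"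
  proof
    fix t assume "t \<in> (\<lambda>i. b + q * i) ` {1..<N div q}"
    then obtain i where i: "1 \<le> i" "i < N div q" "t = b + q * i" by auto
    have "q * i \<ge> 1" using i q by (simp add: Suc_le_eq)
    moreover have "b + q * i < q + q * i" using b by simp
    moreover have "q + q * i \<le> q * (N div q)"
    proof -
      have "Suc i \<le> N div q" using i by simp
      then have "q * Suc i \<le> q * (N div q)" by (rule mult_le_mono2)
      then show ?thesis by simp
    qed
    moreover have "q * (N div q) \<le> N" by simp
    ultimately have "1 \<le> t" "t \<le> N" using i by linarith+
    then show "t \<in> {t\<in>{1..N}. t mod q = b}" using i b by auto
  qed
  ultimately have "card {1..<N div q} \<le> card {t\<in>{1..N}. t mod q = b}"
    by (intro card_inj_on_le) auto
  then show ?thesis by simp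
qed

lemma real_div_ge: "real N / real q - 1 \<le> real (N div q)" if "q > 0" for N q :: nat
proof -
  have "N < q * (N div q + 1)"
  proof -
    have "N < q * (N div q) + q"
      using mult_div_mod_eq[of q N] mod_less_divisor[OF that, of N] by linarith
    then show ?thesis by (simp add: algebra_simps)
  qed
  then have "real N < real (q * (N div q + 1))" by (simp only: of_nat_less_iff)
  then have "real N < real q * (real (N div q) + 1)" by (simp add: algebra_simps)
  then show ?thesis using that by (simp add: field_simps)
qed

lemma real_div_le: "real (N div q) \<le> real N / real q" if "q > 0" for N q :: nat
proof -
  have "q * (N div q) \<le> N" by simp
  then have "real (q * (N div q)) \<le> real N" by (simp only: of_nat_le_iff)
  then have "real q * real (N div q) \<le> real N" by simp
  then show ?thesis using that by (simp add: field_simps)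
qed

lemma C1_upper:
  assumes r0: "r0 \<in> {1..l}" and cop: "coprime (int q) (int (\<alpha> j r0))" and q: "q > 0"
  shows "card {n\<in>box l N. q dvd eval_form \<alpha> l j n} \<le> N ^ (l - 1) * (N div q + 1)"
proof -
  let ?T = "{n\<in>box l N. q dvd eval_form \<alpha> l j n}"
  let ?A = "PiE ({1..l} - {r0}) (\<lambda>_. {1..N})"
  let ?\<Phi> = "\<lambda>n. (restrict n ({1..l} - {r0}), n r0 div q)"
  have "inj_on ?\<Phi> ?T"
  proof (intro inj_onI)
    fix n n' assume n: "n \<in> ?T" and n': "n' \<in> ?T" and eq: "?\<Phi> n = ?\<Phi> n'"
    have e1: "restrict n ({1..l}-{r0}) = restrict n' ({1..l}-{r0})" using eq by simp
    have eqr: "\<And>r. r \<in> {1..l} - {r0} \<Longrightarrow> n r = n' r"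
    proof -
      fix r assume "r \<in> {1..l} - {r0}"
      then show "n r = n' r" using fun_cong[OF e1, of r] by simp
    qed
    have d: "int (eval_form \<alpha> l j n) - int (eval_form \<alpha> l j n') =
     int (\<alpha> j r0) * (int (n r0) - int (n' r0))" by (rule eval_form_diff1[OF r0 eqr])
    have "int q dvd int (eval_form \<alpha> l j n) - int (eval_form \<alpha> l j n')"
      using n n' by (simp add: dvd_diff)
    then have "int q dvd int (\<alpha> j r0) * (int (n r0) - int (n' r0))" using d by simp
    then have "int q dvd (int (n r0) - int (n' r0))"
      using cop by (simp add: coprime_dvd_mult_right_iff)
    then have "n r0 = n' r0" using eq nat_eq_from_mod_div by auto
    then show "n = n'" using n n' eqr by (intro box_ext[of n l N n']) auto
  qed
  moreover have "?\<Phi> ` ?T \<subseteq> ?A \<times> {0..N div q}"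
  proof
    fix z assume "z \<in> ?\<Phi> ` ?T"
    then obtain n where n: "n \<in> box l N" "z = ?\<Phi> n" by auto
    have "restrict n ({1..l} - {r0}) \<in> ?A" apply (rule restrict_PiE_iff[THEN iffD2]) using n(1) by (auto simp: box_def)
    moreover have "n r0 \<le> N" using n(1) r0 unfolding box_def by auto
    then have "n r0 div q \<le> N div q" by (rule div_le_mono)
    ultimately show "z \<in> ?A \<times> {0..N div q}" using n(2) by auto
  qed
  ultimately have "card ?T \<le> card (?A \<times> {0..N div q})"
    by (rule card_inj_on_le) (simp add: finite_PiE)
  also have "\<dots> = N ^ (l - 1) * (N div q + 1)"
    using card_PiE_minus[of "{r0}" l N] r0 by (simp add: card_cartesian_product)
  finally show ?thesis .
qed

lemma bqi_range:
  fixes b q i N :: nat assumes "b < q" "1 \<le> i" "i < N div q"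
  shows "1 \<le> b + q * i" "b + q * i \<le> N"
proof -
  have q: "q > 0" using assms by simp
  have "q * i \<ge> 1" using assms q by (simp add: Suc_le_eq)
  moreover have "b + q * i < q + q * i" using assms by simp
  moreover have "q + q * i \<le> q * (N div q)"
  proof -
    have "Suc i \<le> N div q" using assms by simp
    then have "q * Suc i \<le> q * (N div q)" by (rule mult_le_mono2)
    then show ?thesis by simp
  qed
  moreover have "q * (N div q) \<le> N" by simp
  ultimately show "1 \<le> b + q * i" "b + q * i \<le> N" by linarith+
qed

lemma exists_sol:
  fixes q a c :: nat
  assumes cop: "coprime (int q) (int a)" and q: "q > 0"
  shows "\<exists>b<q. q dvd c + a * b"
proof -
  let ?h = "\<lambda>b. (c + a * b) mod q"
  have "inj_on ?h {..<q}"
  proof (rule inj_onI)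
    fix b b' assume b: "b \<in> {..<q}" and b': "b' \<in> {..<q}" and e: "?h b = ?h b'"
    have "int (c + a * b) mod int q = int (c + a * b') mod int q"
      using e by (metis of_nat_eq_iff zmod_int)
    then have "int q dvd int (c + a * b) - int (c + a * b')" by (simp add: mod_eq_dvd_iff)
    then have "int q dvd int a * (int b - int b')" by (simp add: algebra_simps)
    then have "int q dvd int b - int b'" using cop by (simp add: coprime_dvd_mult_right_iff)
    moreover have "b div q = b' div q" using b b' by simp
    ultimately show "b = b'" by (rule nat_eq_from_mod_div)
  qed
  moreover have "?h ` {..<q} \<subseteq> {..<q}" using q by auto
  ultimately have "?h ` {..<q} = {..<q}"
    by (intro card_subset_eq) (auto simp: card_image)
  then have "0 \<in> ?h ` {..<q}" using q by auto
  then show ?thesis by auto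
qed

lemma eval_form_upd:
  assumes r0: "r0 \<in> {1..l}"
  shows "eval_form \<alpha> l j (m(r0 := t)) = eval_form \<alpha> l j (m(r0 := 0)) + \<alpha> j r0 * t"
proof -
  have "int (eval_form \<alpha> l j (m(r0 := t))) - int (eval_form \<alpha> l j (m(r0 := 0))) =
     int (\<alpha> j r0) * (int ((m(r0 := t)) r0) - int ((m(r0 := 0)) r0))"
    by (rule eval_form_diff1[OF r0]) auto
  then have "int (eval_form \<alpha> l j (m(r0 := t))) = int (eval_form \<alpha> l j (m(r0 := 0)) + \<alpha> j r0 * t)"
    by simp
  then show ?thesis by (simp only: of_nat_eq_iff)
qed

lemma C1_lower:
  assumes r0: "r0 \<in> {1..l}" and cop: "coprime (int q) (int (\<alpha> j r0))" and q: "q > 0"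
  shows "N ^ (l - 1) * (N div q - 1) \<le> card {n\<in>box l N. q dvd eval_form \<alpha> l j n}"
proof -
  let ?T = "{n\<in>box l N. q dvd eval_form \<alpha> l j n}"
  let ?A = "PiE ({1..l} - {r0}) (\<lambda>_. {1..N})"
  define a where "a = \<alpha> j r0"
  define c where "c = (\<lambda>m. eval_form \<alpha> l j (m(r0 := 0)))"
  have "\<forall>m. \<exists>b<q. q dvd c m + a * b" using exists_sol[OF cop[folded a_def] q] by blast
  then obtain bb where bb: "\<And>m. bb m < q" "\<And>m. q dvd c m + a * bb m" by metis
  let ?\<Psi> = "\<lambda>(m, i). m(r0 := bb m + q * i)"
  have "inj_on ?\<Psi> (?A \<times> {1..<N div q})"
  proof (rule inj_onI)
    fix z z' assume z: "z \<in> ?A \<times> {1..<N div q}" and z': "z' \<in> ?A \<times> {1..<N div q}"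
      and e: "?\<Psi> z = ?\<Psi> z'"
    obtain m i where mi: "z = (m, i)" by force
    obtain m' i' where mi': "z' = (m', i')" by force
    have m: "m \<in> ?A" and m': "m' \<in> ?A" using z z' mi mi' by auto
    have e2: "m(r0 := bb m + q * i) = m'(r0 := bb m' + q * i')" using e mi mi' by simp
    have "m = m'"
    proof
      fix r show "m r = m' r"
      proof (cases "r = r0")
        case True
        then have rn: "r \<notin> {1..l} - {r0}" by simp
        show ?thesis using PiE_arb[OF m rn] PiE_arb[OF m' rn] by (rule trans[OF _ sym])
      next
        case False
        then show ?thesis using fun_cong[OF e2, of r] by simp
      qed
    qed
    moreover have "bb m + q * i = bb m' + q * i'" using fun_cong[OF e2, of r0] by simp
    ultimately have "i = i'" using q by simp
    then show "z = z'" using mi mi' \<open>m = m'\<close> by simp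
  qed
  moreover have "?\<Psi> ` (?A \<times> {1..<N div q}) \<subseteq> ?T"
  proof
    fix n assume "n \<in> ?\<Psi> ` (?A \<times> {1..<N div q})"
    then obtain m i where m: "m \<in> ?A" and i: "i \<in> {1..<N div q}" and n: "n = m(r0 := bb m + q * i)"
      by auto
    have rng: "1 \<le> bb m + q * i" "bb m + q * i \<le> N" using bqi_range[OF bb(1)] i by auto
    have "n \<in> box l N"
      unfolding box_def
    proof (rule PiE_I)
      fix r assume r: "r \<in> {1..l}"
      show "n r \<in> {1..N}"
      proof (cases "r = r0")
        case True then show ?thesis using n rng by simp
      next
        case False
        then have "r \<in> {1..l} - {r0}" using r by simp
        then have "m r \<in> {1..N}" by (rule PiE_mem[OF m])
        then show ?thesis using n False by simp
      qed
    next
      fix r assume r: "r \<notin> {1..l}"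
      then have "r \<noteq> r0" using r0 by auto
      then have rn: "r \<notin> {1..l} - {r0}" using r by simp
      show "n r = undefined" using PiE_arb[OF m rn] n \<open>r \<noteq> r0\<close> by simp
    qed
    moreover have "q dvd eval_form \<alpha> l j n"
    proof -
      have "eval_form \<alpha> l j n = (c m + a * bb m) + q * (a * i)"
        unfolding n c_def a_def using eval_form_upd[OF r0, of \<alpha> j m "bb m + q * i"]
        by (simp add: algebra_simps)
      then show ?thesis using bb(2)[of m] by simp
    qed
    ultimately show "n \<in> ?T" by simp
  qed
  ultimately have "card (?A \<times> {1..<N div q}) \<le> card ?T"
    by (rule card_inj_on_le) simp
  moreover have "card (?A \<times> {1..<N div q}) = N ^ (l - 1) * (N div q - 1)"
    using card_PiE_minus[of "{r0}" l N] r0 by (simp add: card_cartesian_product)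
  ultimately show ?thesis by simp
qed

lemma C2_upper:
  fixes p :: nat
  assumes r: "r \<in> {1..l}" and s: "s \<in> {1..l}" and p: "prime p"
    and D: "\<not> int p dvd int (\<alpha> i r) * int (\<alpha> j s) - int (\<alpha> i s) * int (\<alpha> j r)"
  shows "card {n\<in>box l N. p dvd eval_form \<alpha> l i n \<and> p dvd eval_form \<alpha> l j n}
          \<le> N ^ (l - 2) * (N div p + 1) ^ 2"
proof -
  have rs: "r \<noteq> s" using D by auto
  let ?T = "{n\<in>box l N. p dvd eval_form \<alpha> l i n \<and> p dvd eval_form \<alpha> l j n}"
  let ?A = "PiE ({1..l} - {r, s}) (\<lambda>_. {1..N})"
  let ?\<Phi> = "\<lambda>n. (restrict n ({1..l} - {r, s}), n r div p, n s div p)"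
  define D where "D = int (\<alpha> i r) * int (\<alpha> j s) - int (\<alpha> i s) * int (\<alpha> j r)"
  have cop: "coprime (int p) D"
    using D p unfolding D_def by (intro prime_imp_coprime) auto
  have "inj_on ?\<Phi> ?T"
  proof (intro inj_onI)
    fix n n' assume n: "n \<in> ?T" and n': "n' \<in> ?T" and eq: "?\<Phi> n = ?\<Phi> n'"
    have e1: "restrict n ({1..l}-{r,s}) = restrict n' ({1..l}-{r,s})" using eq by simp
    have eqr: "\<And>t. t \<in> {1..l} - {r, s} \<Longrightarrow> n t = n' t"
    proof -
      fix t assume "t \<in> {1..l} - {r, s}"
      then show "n t = n' t" using fun_cong[OF e1, of t] by simp
    qed
    define dr where "dr = int (n r) - int (n' r)"
    define ds where "ds = int (n s) - int (n' s)"
    have di: "int (eval_form \<alpha> l i n) - int (eval_form \<alpha> l i n') = int (\<alpha> i r) * dr + int (\<alpha> i s) * ds"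
      unfolding dr_def ds_def by (rule eval_form_diff2[OF r s rs eqr])
    have dj: "int (eval_form \<alpha> l j n) - int (eval_form \<alpha> l j n') = int (\<alpha> j r) * dr + int (\<alpha> j s) * ds"
      unfolding dr_def ds_def by (rule eval_form_diff2[OF r s rs eqr])
    have pi: "int p dvd int (\<alpha> i r) * dr + int (\<alpha> i s) * ds"
      using n n' di[symmetric] by (auto intro!: dvd_diff)
    have pj: "int p dvd int (\<alpha> j r) * dr + int (\<alpha> j s) * ds"
      using n n' dj[symmetric] by (auto intro!: dvd_diff)
    have "D * dr = int (\<alpha> j s) * (int (\<alpha> i r) * dr + int (\<alpha> i s) * ds)
                 - int (\<alpha> i s) * (int (\<alpha> j r) * dr + int (\<alpha> j s) * ds)"
      unfolding D_def by (simp add: algebra_simps)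
    then have "int p dvd D * dr" using pi pj by (simp add: dvd_diff)
    then have "int p dvd dr" using cop by (simp add: coprime_dvd_mult_right_iff)
    then have "n r = n' r" using eq nat_eq_from_mod_div unfolding dr_def by auto
    have "D * ds = int (\<alpha> i r) * (int (\<alpha> j r) * dr + int (\<alpha> j s) * ds)
                 - int (\<alpha> j r) * (int (\<alpha> i r) * dr + int (\<alpha> i s) * ds)"
      unfolding D_def by (simp add: algebra_simps)
    then have "int p dvd D * ds" using pi pj by (simp add: dvd_diff)
    then have "int p dvd ds" using cop by (simp add: coprime_dvd_mult_right_iff)
    then have "n s = n' s" using eq nat_eq_from_mod_div unfolding ds_def by auto
    show "n = n'"
    proof (rule box_ext[of n l N n'])
      show "n \<in> box l N" "n' \<in> box l N" using n n' by auto
      fix t assume "t \<in> {1..l}"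
      then show "n t = n' t" using eqr \<open>n r = n' r\<close> \<open>n s = n' s\<close> by blast
    qed
  qed
  moreover have "?\<Phi> ` ?T \<subseteq> ?A \<times> {0..N div p} \<times> {0..N div p}"
  proof
    fix z assume "z \<in> ?\<Phi> ` ?T"
    then obtain n where n: "n \<in> box l N" "z = ?\<Phi> n" by auto
    have "restrict n ({1..l} - {r, s}) \<in> ?A"
      apply (rule restrict_PiE_iff[THEN iffD2]) using n(1) by (auto simp: box_def)
    moreover have "n r \<le> N" "n s \<le> N" using n(1) r s unfolding box_def by auto
    then have "n r div p \<le> N div p" "n s div p \<le> N div p" by (auto intro: div_le_mono)
    ultimately show "z \<in> ?A \<times> {0..N div p} \<times> {0..N div p}" using n(2) by auto
  qed
  ultimately have "card ?T \<le> card (?A \<times> {0..N div p} \<times> {0..N div p})"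
    by (rule card_inj_on_le) (simp add: finite_PiE)
  also have "\<dots> = N ^ (l - 2) * (N div p + 1) ^ 2"
    using card_PiE_minus[of "{r, s}" l N] r s rs by (simp add: card_cartesian_product power2_eq_square numeral_2_eq_2)
  finally show ?thesis .
qed

lemma int_eval_form:
  "int (eval_form \<alpha> l j n) = int (\<alpha> j 0) + (\<Sum>t=1..l. int (\<alpha> j t) * int (n t))"
  unfolding eval_form_def by simp

lemma C2_zero:
  fixes p :: nat
  assumes r: "r \<in> {1..l}" and rel: "\<forall>s\<in>{1..l}. \<alpha> j r * \<alpha> i s = \<alpha> i r * \<alpha> j s"
    and D: "\<not> int p dvd int (\<alpha> j r) * int (\<alpha> i 0) - int (\<alpha> i r) * int (\<alpha> j 0)"
  shows "{n\<in>box l N. p dvd eval_form \<alpha> l i n \<and> p dvd eval_form \<alpha> l j n} = {}"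
proof (rule ccontr)
  assume "{n\<in>box l N. p dvd eval_form \<alpha> l i n \<and> p dvd eval_form \<alpha> l j n} \<noteq> {}"
  then obtain n where n: "p dvd eval_form \<alpha> l i n" "p dvd eval_form \<alpha> l j n" by auto
  have "int (\<alpha> j r) * int (eval_form \<alpha> l i n) - int (\<alpha> i r) * int (eval_form \<alpha> l j n)
      = int (\<alpha> j r) * int (\<alpha> i 0) - int (\<alpha> i r) * int (\<alpha> j 0)
        + (\<Sum>t=1..l. (int (\<alpha> j r * \<alpha> i t) - int (\<alpha> i r * \<alpha> j t)) * int (n t))"
    unfolding int_eval_form by (simp add: algebra_simps sum_distrib_left sum_subtractf)
  also have "(\<Sum>t=1..l. (int (\<alpha> j r * \<alpha> i t) - int (\<alpha> i r * \<alpha> j t)) * int (n t)) = 0"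
    using rel by (intro sum.neutral) auto
  finally have "int (\<alpha> j r) * int (\<alpha> i 0) - int (\<alpha> i r) * int (\<alpha> j 0)
      = int (\<alpha> j r) * int (eval_form \<alpha> l i n) - int (\<alpha> i r) * int (eval_form \<alpha> l j n)" by simp
  moreover have "int p dvd int (\<alpha> j r) * int (eval_form \<alpha> l i n) - int (\<alpha> i r) * int (eval_form \<alpha> l j n)"
    using n by (intro dvd_diff dvd_mult) auto
  ultimately show False using D by simp
qed

definition avg :: "nat \<Rightarrow> ((nat \<Rightarrow> nat) \<Rightarrow> complex) \<Rightarrow> real \<Rightarrow> complex" where
  "avg l F x = complex_of_real (x powr (- real l)) * (\<Sum>n\<in>box l (nat \<lfloor>x\<rfloor>). F n)"

lemma powr_neg_nat: "x > 0 \<Longrightarrow> x powr (- real l) = 1 / x ^ l"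
  by (simp add: powr_minus powr_realpow divide_inverse)

lemma floor_facts:
  fixes x :: real assumes "x \<ge> 1"
  shows "real (nat \<lfloor>x\<rfloor>) \<le> x" "x - 1 < real (nat \<lfloor>x\<rfloor>)" "nat \<lfloor>x\<rfloor> \<ge> 1"
  using assms by linarith+

lemma upper_density:
  fixes c :: "nat \<Rightarrow> real"
  assumes l: "l \<ge> 1" and A: "A \<ge> 0" and B: "B \<ge> 0"
    and c: "\<And>N. N \<ge> 1 \<Longrightarrow> c N \<le> A * real N ^ l + B * real N ^ (l - 1)" and x: "x \<ge> 1"
  shows "x powr (- real l) * c (nat \<lfloor>x\<rfloor>) \<le> A + B / x"
proof -
  define N where "N = nat \<lfloor>x\<rfloor>"
  have N: "real N \<le> x" "N \<ge> 1" using floor_facts[OF x] unfolding N_def by auto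
  have h1: "A * real N ^ l \<le> A * x ^ l" using A N by (intro mult_left_mono power_mono) auto
  have h2: "B * real N ^ (l - 1) \<le> B * x ^ (l - 1)" using B N by (intro mult_left_mono power_mono) auto
  have "c N \<le> A * x ^ l + B * x ^ (l - 1)" using c[OF N(2)] h1 h2 by linarith
  then have "x powr (- real l) * c N \<le> x powr (- real l) * (A * x ^ l + B * x ^ (l - 1))"
    by (intro mult_left_mono) auto
  also have "\<dots> = (A * x ^ l + B * x ^ (l - 1)) / x ^ l" using x by (simp add: powr_neg_nat)
  finally have "x powr (- real l) * c N \<le> (A * x ^ l + B * x ^ (l - 1)) / x ^ l" .
  also have "\<dots> = A + B / x"
  proof -
    have "x ^ l = x * x ^ (l - 1)" using l by (metis Suc_diff_1 less_le_trans zero_less_one power_Suc)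
    then show ?thesis using x by (simp add: field_simps)
  qed
  finally show ?thesis unfolding N_def .
qed

lemma lower_density:
  fixes c :: "nat \<Rightarrow> real"
  assumes l: "l \<ge> 1" and A: "A \<ge> 0" and B: "B \<ge> 0"
    and c: "\<And>N. N \<ge> 1 \<Longrightarrow> c N \<ge> A * real N ^ l - B * real N ^ (l - 1)" and x: "x \<ge> 1"
  shows "x powr (- real l) * c (nat \<lfloor>x\<rfloor>) \<ge> A * ((x - 1) / x) ^ l - B / x"
proof -
  define N where "N = nat \<lfloor>x\<rfloor>"
  have N: "real N \<le> x" "x - 1 \<le> real N" "N \<ge> 1" using floor_facts[OF x] unfolding N_def by auto
  have h1: "A * (x - 1) ^ l \<le> A * real N ^ l" using A N x by (intro mult_left_mono power_mono) auto
  have h2: "B * real N ^ (l - 1) \<le> B * x ^ (l - 1)" using B N by (intro mult_left_mono power_mono) auto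
  have "A * (x - 1) ^ l - B * x ^ (l - 1) \<le> c N" using c[OF N(3)] h1 h2 by linarith
  then have "x powr (- real l) * (A * (x - 1) ^ l - B * x ^ (l - 1)) \<le> x powr (- real l) * c N"
    by (intro mult_left_mono) auto
  moreover have "x powr (- real l) * (A * (x - 1) ^ l - B * x ^ (l - 1)) = (A * (x - 1) ^ l - B * x ^ (l - 1)) / x ^ l"
    using x by (simp add: powr_neg_nat)
  ultimately have "(A * (x - 1) ^ l - B * x ^ (l - 1)) / x ^ l \<le> x powr (- real l) * c N" by simp
  moreover have "(A * (x - 1) ^ l - B * x ^ (l - 1)) / x ^ l = A * ((x - 1) / x) ^ l - B / x"
  proof -
    have "x ^ l = x * x ^ (l - 1)" using l by (metis Suc_diff_1 less_le_trans zero_less_one power_Suc)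
    then show ?thesis using x by (simp add: field_simps power_divide)
  qed
  ultimately show ?thesis unfolding N_def by simp
qed

lemma density_limit:
  fixes c :: "nat \<Rightarrow> real"
  assumes l: "l \<ge> 1" and A: "A \<ge> 0" and Bu: "Bu \<ge> 0" and B: "B \<ge> 0"
    and cu: "\<And>N. N \<ge> 1 \<Longrightarrow> c N \<le> A * real N ^ l + Bu * real N ^ (l - 1)"
    and cl: "\<And>N. N \<ge> 1 \<Longrightarrow> c N \<ge> A * real N ^ l - B * real N ^ (l - 1)"
  shows "((\<lambda>x. x powr (- real l) * c (nat \<lfloor>x\<rfloor>)) \<longlongrightarrow> A) at_top"
proof (rule tendsto_sandwich)
  show "eventually (\<lambda>x. x powr (- real l) * c (nat \<lfloor>x\<rfloor>) \<le> A + Bu / x) at_top"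
    using eventually_ge_at_top[of 1] by eventually_elim (rule upper_density[OF l A Bu cu])
  show "eventually (\<lambda>x. A * ((x - 1) / x) ^ l - B / x \<le> x powr (- real l) * c (nat \<lfloor>x\<rfloor>)) at_top"
    using eventually_ge_at_top[of 1] by eventually_elim (rule lower_density[OF l A B cl])
  have B0: "((\<lambda>x::real. B / x) \<longlongrightarrow> 0) at_top" by real_asymp
  have Bu0: "((\<lambda>x::real. Bu / x) \<longlongrightarrow> 0) at_top" by real_asymp
  show "((\<lambda>x. A + Bu / x) \<longlongrightarrow> A) at_top" using tendsto_add[OF tendsto_const[of A] Bu0] by simp
  have "((\<lambda>x::real. (x - 1) / x) \<longlongrightarrow> 1) at_top" by real_asymp
  then have "((\<lambda>x::real. ((x - 1) / x) ^ l) \<longlongrightarrow> 1) at_top" using tendsto_power by fastforce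
  then have "((\<lambda>x::real. A * ((x - 1) / x) ^ l - B / x) \<longlongrightarrow> A * 1 - 0) at_top"
    by (intro tendsto_intros B0)
  then show "((\<lambda>x. A * ((x - 1) / x) ^ l - B / x) \<longlongrightarrow> A) at_top" by simp
qed

lemma C1_bounds_real:
  assumes r0: "r0 \<in> {1..l}" and cop: "coprime (int q) (int (\<alpha> j r0))" and q: "q > 0"
  shows "real (card {n\<in>box l N. q dvd eval_form \<alpha> l j n}) \<le> (1 / q) * real N ^ l + 1 * real N ^ (l - 1)"
    "real (card {n\<in>box l N. q dvd eval_form \<alpha> l j n}) \<ge> (1 / q) * real N ^ l - 2 * real N ^ (l - 1)"
proof -
  have l: "l \<ge> 1" using r0 by auto
  have pl: "real N ^ l = real N * real N ^ (l - 1)" using l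
    by (metis Suc_diff_1 less_le_trans zero_less_one power_Suc)
  have "real (card {n\<in>box l N. q dvd eval_form \<alpha> l j n}) \<le> real (N ^ (l - 1) * (N div q + 1))"
    using C1_upper[of r0 l q \<alpha> j N, OF r0 cop q] by (simp only: of_nat_le_iff)
  also have "\<dots> = real N ^ (l - 1) * (real (N div q) + 1)" by (simp add: algebra_simps)
  also have "\<dots> \<le> real N ^ (l - 1) * (real N / real q + 1)"
    using real_div_le[OF q, of N] by (intro mult_left_mono) auto
  also have "\<dots> = (1 / q) * real N ^ l + 1 * real N ^ (l - 1)" unfolding pl by (simp add: field_simps)
  finally show "real (card {n\<in>box l N. q dvd eval_form \<alpha> l j n}) \<le> (1 / q) * real N ^ l + 1 * real N ^ (l - 1)" .
  have "(1 / q) * real N ^ l - 2 * real N ^ (l - 1) = real N ^ (l - 1) * (real N / real q - 2)"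
    unfolding pl by (simp add: field_simps)
  also have "\<dots> \<le> real N ^ (l - 1) * real (N div q - 1)"
  proof (intro mult_left_mono)
    have "real (N div q) - 1 \<le> real (N div q - 1)" by linarith
    then show "real N / real q - 2 \<le> real (N div q - 1)" using real_div_ge[OF q, of N] by linarith
  qed auto
  also have "\<dots> = real (N ^ (l - 1) * (N div q - 1))" by simp
  also have "\<dots> \<le> real (card {n\<in>box l N. q dvd eval_form \<alpha> l j n})"
    using C1_lower[of r0 l q \<alpha> j N, OF r0 cop q] by (simp only: of_nat_le_iff)
  finally show "real (card {n\<in>box l N. q dvd eval_form \<alpha> l j n}) \<ge> (1 / q) * real N ^ l - 2 * real N ^ (l - 1)" .
qed

lemma C1_density:
  assumes r0: "r0 \<in> {1..l}" and cop: "coprime (int q) (int (\<alpha> j r0))" and q: "q > 0"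
  shows "((\<lambda>x. x powr (- real l) * real (card {n\<in>box l (nat \<lfloor>x\<rfloor>). q dvd eval_form \<alpha> l j n}))
           \<longlongrightarrow> 1 / q) at_top"
proof -
  have l: "l \<ge> 1" using r0 by auto
  have "((\<lambda>x. x powr (- real l) * (\<lambda>N. real (card {n\<in>box l N. q dvd eval_form \<alpha> l j n})) (nat \<lfloor>x\<rfloor>))
           \<longlongrightarrow> 1 / q) at_top"
    by (rule density_limit[OF l _ _ _ C1_bounds_real(1)[of r0 l q \<alpha> j, OF r0 cop q]
          C1_bounds_real(2)[of r0 l q \<alpha> j, OF r0 cop q]]) (auto simp: q)
  then show ?thesis by simp
qed

lemma C1_upper_avg:
  assumes r0: "r0 \<in> {1..l}" and cop: "coprime (int q) (int (\<alpha> j r0))" and q: "q > 0" and x: "x \<ge> 1"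
  shows "x powr (- real l) * real (card {n\<in>box l (nat \<lfloor>x\<rfloor>). q dvd eval_form \<alpha> l j n}) \<le> 1 / q + 1 / x"
proof -
  have l: "l \<ge> 1" using r0 by auto
  show ?thesis
    using upper_density[OF l _ _ C1_bounds_real(1)[of r0 l q \<alpha> j, OF r0 cop q] x] by simp
qed

lemma C2_real:
  fixes p N :: nat
  assumes N: "N \<ge> 1" and l: "l \<ge> 2" and p: "p \<ge> 2"
    and c: "c \<le> N ^ (l - 2) * (N div p + 1) ^ 2"
  shows "real c \<le> (1 / real p ^ 2) * real N ^ l + 3 * real N ^ (l - 1)"
proof -
  have p0: "p > 0" using p by simp
  define a where "a = real N / real p"
  have a0: "a \<ge> 0" unfolding a_def by simp
  have aN: "a \<le> real N" unfolding a_def using p N by (simp add: field_simps)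
  have pl: "real N ^ l = real N ^ 2 * real N ^ (l - 2)"
    using l by (metis le_add_diff_inverse power_add)
  have pl1: "real N ^ (l - 1) = real N * real N ^ (l - 2)"
    using l by (metis (no_types, lifting) One_nat_def Suc_diff_Suc Suc_le_eq diff_Suc_1 numeral_2_eq_2 power_Suc)
  have pl2: "real N ^ (l - 2) \<le> real N ^ (l - 1)"
    using N by (intro power_increasing) auto
  have "real c \<le> real (N ^ (l - 2) * (N div p + 1) ^ 2)"
    using c by (simp only: of_nat_le_iff)
  also have "\<dots> = real N ^ (l - 2) * (real (N div p) + 1) ^ 2" by simp
  also have "\<dots> \<le> real N ^ (l - 2) * (a + 1) ^ 2"
    using real_div_le[OF p0, of N] unfolding a_def by (intro mult_left_mono power_mono) auto
  also have "\<dots> = real N ^ (l - 2) * a ^ 2 + 2 * (a * real N ^ (l - 2)) + real N ^ (l - 2)"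
    by (simp add: power2_eq_square algebra_simps)
  also have "real N ^ (l - 2) * a ^ 2 = (1 / real p ^ 2) * real N ^ l"
    unfolding pl a_def by (simp add: power_divide)
  also have "a * real N ^ (l - 2) \<le> real N ^ (l - 1)"
    unfolding pl1 using aN by (intro mult_right_mono) auto
  finally show ?thesis using pl2 by linarith
qed

lemma approx_conv:
  fixes F :: "real \<Rightarrow> complex" and G :: "nat \<Rightarrow> real \<Rightarrow> complex"
  assumes G: "\<And>M. (G M \<longlongrightarrow> Lv M) at_top"
    and E: "\<And>M. eventually (\<lambda>x. norm (F x - G M x) \<le> \<eta> M) at_top"
    and eta: "\<eta> \<longlonglongrightarrow> 0"
  shows "\<exists>L. (F \<longlongrightarrow> L) at_top \<and> Lv \<longlonglongrightarrow> L"
proof -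
  have LL: "norm (Lv M - Lv M') \<le> \<eta> M + \<eta> M'" for M M'
  proof (rule tendsto_upperbound)
    show "((\<lambda>x. norm (G M x - G M' x)) \<longlongrightarrow> norm (Lv M - Lv M')) at_top"
      by (intro tendsto_intros G)
    show "eventually (\<lambda>x. norm (G M x - G M' x) \<le> \<eta> M + \<eta> M') at_top"
      using E[of M] E[of M']
    proof eventually_elim
      case (elim x)
      have "norm (G M x - G M' x) \<le> norm (F x - G M x) + norm (F x - G M' x)"
        by (metis norm_minus_commute norm_triangle_ineq4 diff_diff_eq2 add.commute
            diff_add_cancel norm_triangle_sub)
      then show ?case using elim by linarith
    qed
  qed simp
  have "Cauchy Lv"
  proof (rule metric_CauchyI)
    fix e :: real assume e: "e > 0"
    have e2: "e / 2 > 0" using e by simp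
    obtain no where no0: "\<forall>n\<ge>no. dist (\<eta> n) 0 < e / 2"
      using eta[unfolded lim_sequentially] e2 by blast
    then have no: "\<And>n. n \<ge> no \<Longrightarrow> \<bar>\<eta> n\<bar> < e / 2" by auto
    show "\<exists>M. \<forall>m\<ge>M. \<forall>n\<ge>M. dist (Lv m) (Lv n) < e"
    proof (intro exI allI impI)
      fix m n assume "m \<ge> no" "n \<ge> no"
      then have "\<bar>\<eta> m\<bar> < e / 2" "\<bar>\<eta> n\<bar> < e / 2" using no by auto
      then show "dist (Lv m) (Lv n) < e" using LL[of m n] by (simp add: dist_norm)
    qed
  qed
  then obtain L where L: "Lv \<longlonglongrightarrow> L" using Cauchy_convergent_iff convergent_def by blast
  have "(F \<longlongrightarrow> L) at_top"
  proof (rule tendstoI)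
    fix e :: real assume e: "e > 0"
    have "eventually (\<lambda>M. \<bar>\<eta> M\<bar> < e / 3) sequentially"
      using tendstoD[OF eta, of "e/3"] e by (simp add: dist_real_def)
    moreover have "eventually (\<lambda>M. dist (Lv M) L < e / 3) sequentially"
      using tendstoD[OF L, of "e/3"] e by simp
    ultimately have "eventually (\<lambda>M. \<bar>\<eta> M\<bar> < e / 3 \<and> dist (Lv M) L < e / 3) sequentially"
      by eventually_elim auto
    then obtain M where M: "\<bar>\<eta> M\<bar> < e / 3" "dist (Lv M) L < e / 3"
      using eventually_sequentially by auto
    have "eventually (\<lambda>x. dist (G M x) (Lv M) < e / 3) at_top" using tendstoD[OF G[of M], of "e/3"] e by simp
    then show "eventually (\<lambda>x. dist (F x) L < e) at_top" using E[of M]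
    proof eventually_elim
      case (elim x)
      have t1: "dist (F x) L \<le> dist (F x) (G M x) + dist (G M x) L" by (rule dist_triangle)
      have t2: "dist (G M x) L \<le> dist (G M x) (Lv M) + dist (Lv M) L" by (rule dist_triangle)
      have "dist (F x) L \<le> norm (F x - G M x) + dist (G M x) (Lv M) + dist (Lv M) L"
        using t1 t2 by (simp add: dist_norm)
      then show ?case using elim M by linarith
    qed
  qed
  then show ?thesis using L by blast
qed

lemma dens1:
  fixes q b :: nat assumes q: "q > 0" and b: "b < q"
  shows "((\<lambda>x. real (card {t\<in>{1..nat \<lfloor>x\<rfloor>}. t mod q = b}) / x) \<longlongrightarrow> 1 / q) at_top"
proof -
  let ?c = "\<lambda>N. real (card {t\<in>{1..N}. t mod q = b})"
  have "((\<lambda>x. x powr (- real (1::nat)) * ?c (nat \<lfloor>x\<rfloor>)) \<longlongrightarrow> 1 / q) at_top"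
  proof (rule density_limit[where Bu = 1 and B = 2])
    fix N :: nat
    have "?c N \<le> real (N div q + 1)" using card_mod_le[OF q, of N b] by (simp only: of_nat_le_iff)
    also have "\<dots> \<le> real N / q + 1" using real_div_le[OF q, of N] by simp
    finally show "?c N \<le> 1 / real q * real N ^ 1 + 1 * real N ^ (1 - 1)" by simp
    have "real (N div q - 1) \<le> ?c N" using card_mod_ge[OF q b, of N] by (simp only: of_nat_le_iff)
    moreover have "real (N div q) - 1 \<le> real (N div q - 1)" by linarith
    ultimately show "1 / real q * real N ^ 1 - 2 * real N ^ (1 - 1) \<le> ?c N"
      using real_div_ge[OF q, of N] by simp
  qed auto
  then show ?thesis
    by (rule Lim_transform_eventually)
       (use eventually_gt_at_top[of 0] in \<open>eventually_elim, simp add: powr_minus divide_inverse mult.commute\<close>)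
qed

lemma periodic_conv:
  fixes \<Psi> :: "(nat \<Rightarrow> nat) \<Rightarrow> complex"
  assumes q: "q > 0" and per: "\<And>n n'. (\<forall>r\<in>{1..l}. n r mod q = n' r mod q) \<Longrightarrow> \<Psi> n = \<Psi> n'"
  shows "\<exists>L. (avg l \<Psi> \<longlongrightarrow> L) at_top"
proof -
  let ?I = "{1..l}"
  let ?A = "PiE ?I (\<lambda>_. {..<q})"
  let ?res = "\<lambda>n. restrict (\<lambda>r. n r mod q) ?I"
  let ?fib = "\<lambda>N a. PiE ?I (\<lambda>r. {t\<in>{1..N}. t mod q = a r})"
  have fin: "finite ?A" by (auto intro: finite_PiE)
  have key: "(\<Sum>n\<in>box l N. \<Psi> n) = (\<Sum>a\<in>?A. \<Psi> a * of_nat (card (?fib N a)))" for N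
  proof -
    have "(\<Sum>n\<in>box l N. \<Psi> n) = (\<Sum>a\<in>?A. \<Sum>n\<in>{n\<in>box l N. ?res n = a}. \<Psi> n)"
      by (rule sum.group[symmetric]) (use q in \<open>auto simp: box_def PiE_iff intro: finite_PiE\<close>)
    also have "\<dots> = (\<Sum>a\<in>?A. \<Psi> a * of_nat (card (?fib N a)))"
    proof (rule sum.cong[OF refl])
      fix a assume a: "a \<in> ?A"
      have fe: "{n\<in>box l N. ?res n = a} = ?fib N a"
      proof (intro equalityI subsetI)
        fix n assume n: "n \<in> {n\<in>box l N. ?res n = a}"
        then have "\<And>r. r \<in> ?I \<Longrightarrow> n r mod q = a r" by (metis (mono_tags, lifting) mem_Collect_eq restrict_apply')
        then show "n \<in> ?fib N a" using n by (auto simp: box_def PiE_iff)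
      next
        fix n assume n: "n \<in> ?fib N a"
        then have "n \<in> box l N" by (auto simp: box_def PiE_iff)
        moreover have "?res n = a"
        proof
          fix r show "?res n r = a r"
            using n a by (cases "r \<in> ?I") (auto simp: PiE_iff extensional_def)
        qed
        ultimately show "n \<in> {n\<in>box l N. ?res n = a}" by simp
      qed
      have "(\<Sum>n\<in>?fib N a. \<Psi> n) = (\<Sum>n\<in>?fib N a. \<Psi> a)"
      proof (rule sum.cong[OF refl])
        fix n assume n: "n \<in> ?fib N a"
        have "\<forall>r\<in>?I. n r mod q = a r mod q"
        proof
          fix r assume r: "r \<in> ?I"
          then have "n r mod q = a r" using n by (auto simp: PiE_iff)
          moreover have "a r < q" using a r by (auto simp: PiE_iff)
          ultimately show "n r mod q = a r mod q" by simp
        qed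
        then show "\<Psi> n = \<Psi> a" by (rule per)
      qed
      then show "(\<Sum>n\<in>{n\<in>box l N. ?res n = a}. \<Psi> n) = \<Psi> a * of_nat (card (?fib N a))"
        unfolding fe by (simp add: mult.commute)
    qed
    finally show ?thesis .
  qed
  have ev: "eventually (\<lambda>x. avg l \<Psi> x = (\<Sum>a\<in>?A. \<Psi> a *
      of_real (\<Prod>r\<in>?I. real (card {t\<in>{1..nat \<lfloor>x\<rfloor>}. t mod q = a r}) / x))) at_top"
    using eventually_gt_at_top[of 0]
  proof eventually_elim
    case (elim x)
    have "x powr (- real l) = (\<Prod>r\<in>?I. 1 / x)" using elim by (simp add: powr_neg_nat power_one_over)
    have hh: "complex_of_real (x powr (- real l)) * of_nat (card (?fib (nat \<lfloor>x\<rfloor>) a)) =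
          of_real (\<Prod>r\<in>?I. real (card {t\<in>{1..nat \<lfloor>x\<rfloor>}. t mod q = a r}) / x)" for a
    proof -
      have "x powr (- real l) * real (card (?fib (nat \<lfloor>x\<rfloor>) a)) =
          (\<Prod>r\<in>?I. 1 / x) * (\<Prod>r\<in>?I. real (card {t\<in>{1..nat \<lfloor>x\<rfloor>}. t mod q = a r}))"
        unfolding \<open>x powr (- real l) = (\<Prod>r\<in>?I. 1 / x)\<close> by (simp add: card_PiE)
      also have "\<dots> = (\<Prod>r\<in>?I. 1 / x * real (card {t\<in>{1..nat \<lfloor>x\<rfloor>}. t mod q = a r}))"
        by (simp only: prod.distrib)
      also have "\<dots> = (\<Prod>r\<in>?I. real (card {t\<in>{1..nat \<lfloor>x\<rfloor>}. t mod q = a r}) / x)"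
        by (intro prod.cong) auto
      finally have "x powr (- real l) * real (card (?fib (nat \<lfloor>x\<rfloor>) a)) =
          (\<Prod>r\<in>?I. real (card {t\<in>{1..nat \<lfloor>x\<rfloor>}. t mod q = a r}) / x)" .
      moreover have "complex_of_real (x powr (- real l)) * of_nat (card (?fib (nat \<lfloor>x\<rfloor>) a)) =
         of_real (x powr (- real l) * real (card (?fib (nat \<lfloor>x\<rfloor>) a)))" by simp
      ultimately show ?thesis by simp
    qed
    show ?case unfolding avg_def key sum_distrib_left
    proof (intro sum.cong refl)
      fix a
      have "complex_of_real (x powr (- real l)) * (\<Psi> a * of_nat (card (?fib (nat \<lfloor>x\<rfloor>) a)))
         = \<Psi> a * (complex_of_real (x powr (- real l)) * of_nat (card (?fib (nat \<lfloor>x\<rfloor>) a)))"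
        by (rule mult.left_commute)
      then show "complex_of_real (x powr (- real l)) * (\<Psi> a * of_nat (card (?fib (nat \<lfloor>x\<rfloor>) a)))
         = \<Psi> a * of_real (\<Prod>r\<in>?I. real (card {t\<in>{1..nat \<lfloor>x\<rfloor>}. t mod q = a r}) / x)"
        unfolding hh .
    qed
  qed
  have "((\<lambda>x. (\<Sum>a\<in>?A. \<Psi> a *
      of_real (\<Prod>r\<in>?I. real (card {t\<in>{1..nat \<lfloor>x\<rfloor>}. t mod q = a r}) / x))) \<longlongrightarrow>
      (\<Sum>a\<in>?A. \<Psi> a * of_real (\<Prod>r\<in>?I. 1 / real q))) at_top"
  proof (intro tendsto_sum tendsto_mult tendsto_const tendsto_of_real tendsto_prod)
    fix a r assume a: "a \<in> ?A" and r: "r \<in> ?I"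
    have "a r < q" using a r by (auto simp: PiE_iff)
    then show "((\<lambda>x. real (card {t\<in>{1..nat \<lfloor>x\<rfloor>}. t mod q = a r}) / x) \<longlongrightarrow> 1 / real q) at_top"
      by (rule dens1[OF q])
  qed
  then show ?thesis using Lim_transform_eventually[OF _ ev[THEN eventually_mono, OF sym]] by blast
qed

lemma prod_diff_bounds:
  fixes z :: "'i \<Rightarrow> complex"
  assumes "finite I"
  shows "norm ((\<Prod>i\<in>I. 1 + z i) - 1) \<le> (\<Prod>i\<in>I. 1 + norm (z i)) - 1"
    "norm ((\<Prod>i\<in>I. 1 + z i) - 1 - (\<Sum>i\<in>I. z i)) \<le> (\<Prod>i\<in>I. 1 + norm (z i)) - 1 - (\<Sum>i\<in>I. norm (z i))"
  using assms
proof (induction I rule: finite_induct)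
  case empty
  { case 1 show ?case by simp }
  { case 2 show ?case by simp }
next
  case (insert a I)
  define P where "P = (\<Prod>i\<in>I. 1 + z i)"
  define Q where "Q = (\<Prod>i\<in>I. 1 + norm (z i))"
  define S where "S = (\<Sum>i\<in>I. z i)"
  define T where "T = (\<Sum>i\<in>I. norm (z i))"
  have PQ: "norm P \<le> Q" unfolding P_def Q_def prod_norm[symmetric]
    by (intro prod_mono) (auto intro: norm_triangle_le)
  have Q1: "Q \<ge> 1" unfolding Q_def by (intro prod_ge_1) auto
  have IH1: "norm (P - 1) \<le> Q - 1" using insert.IH(1) unfolding P_def Q_def .
  have IH2: "norm (P - 1 - S) \<le> Q - 1 - T" using insert.IH(2) unfolding P_def Q_def S_def T_def .
  have e1: "(\<Prod>i\<in>insert a I. 1 + z i) = (1 + z a) * P" unfolding P_def using insert by simp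
  have e2: "(\<Prod>i\<in>insert a I. 1 + norm (z i)) = (1 + norm (z a)) * Q" unfolding Q_def using insert by simp
  have e3: "(\<Sum>i\<in>insert a I. z i) = z a + S" unfolding S_def using insert by simp
  have e4: "(\<Sum>i\<in>insert a I. norm (z i)) = norm (z a) + T" unfolding T_def using insert by simp
  have "norm ((1 + z a) * P - 1) = norm ((P - 1) + z a * P)" by (simp add: algebra_simps)
  also have "\<dots> \<le> norm (P - 1) + norm (z a) * norm P" by (rule order.trans[OF norm_triangle_ineq]) (simp add: norm_mult)
  also have "\<dots> \<le> (Q - 1) + norm (z a) * Q" using IH1 PQ by (intro add_mono mult_left_mono) auto
  also have "\<dots> = (1 + norm (z a)) * Q - 1" by (simp add: algebra_simps)
  finally show "norm ((\<Prod>i\<in>insert a I. 1 + z i) - 1) \<le> (\<Prod>i\<in>insert a I. 1 + norm (z i)) - 1"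
    unfolding e1 e2 .
  have "norm ((1 + z a) * P - 1 - (z a + S)) = norm ((P - 1 - S) + z a * (P - 1))" by (simp add: algebra_simps)
  also have "\<dots> \<le> norm (P - 1 - S) + norm (z a) * norm (P - 1)"
    by (rule order.trans[OF norm_triangle_ineq]) (simp add: norm_mult)
  also have "\<dots> \<le> (Q - 1 - T) + norm (z a) * (Q - 1)" using IH1 IH2 by (intro add_mono mult_left_mono) auto
  also have "\<dots> = (1 + norm (z a)) * Q - 1 - (norm (z a) + T)" by (simp add: algebra_simps)
  finally show "norm ((\<Prod>i\<in>insert a I. 1 + z i) - 1 - (\<Sum>i\<in>insert a I. z i)) \<le>
      (\<Prod>i\<in>insert a I. 1 + norm (z i)) - 1 - (\<Sum>i\<in>insert a I. norm (z i))"
    unfolding e1 e2 e3 e4 .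
qed

lemma prod_first_order:
  fixes z :: "'i \<Rightarrow> complex"
  assumes "finite I" and s: "(\<Sum>i\<in>I. norm (z i)) \<le> 1"
  shows "norm ((\<Prod>i\<in>I. 1 + z i) - 1) \<le> 2 * (\<Sum>i\<in>I. norm (z i))"
proof -
  let ?s = "\<Sum>i\<in>I. norm (z i)"
  have "(\<Prod>i\<in>I. 1 + norm (z i)) \<le> exp ?s" by (rule prod_le_exp_sum) auto
  also have "\<dots> \<le> 1 + ?s + ?s\<^sup>2" by (rule exp_bound) (auto intro: sum_nonneg s)
  also have "?s\<^sup>2 \<le> ?s"
    using mult_left_le[OF s sum_nonneg[of I "\<lambda>i. norm (z i)"]] by (simp add: power2_eq_square)
  finally show ?thesis using prod_diff_bounds(1)[OF assms(1), of z] by linarith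
qed

lemma prod_second_order:
  fixes z :: "'i \<Rightarrow> complex"
  assumes "finite I" and s: "(\<Sum>i\<in>I. norm (z i)) \<le> 1"
  shows "norm ((\<Prod>i\<in>I. 1 + z i) - 1 - (\<Sum>i\<in>I. z i)) \<le> (\<Sum>i\<in>I. norm (z i))\<^sup>2"
proof -
  let ?s = "\<Sum>i\<in>I. norm (z i)"
  have "(\<Prod>i\<in>I. 1 + norm (z i)) \<le> exp ?s" by (rule prod_le_exp_sum) auto
  also have "\<dots> \<le> 1 + ?s + ?s\<^sup>2" by (rule exp_bound) (auto intro: sum_nonneg s)
  finally show ?thesis using prod_diff_bounds(2)[OF assms(1), of z] by linarith
qed

lemma avg_diff: "avg l (\<lambda>n. A n - B n) x = avg l A x - avg l B x"
  unfolding avg_def by (simp add: sum_subtractf algebra_simps)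

lemma avg_add: "avg l (\<lambda>n. A n + B n) x = avg l A x + avg l B x"
  unfolding avg_def by (simp add: sum.distrib algebra_simps)

lemma avg_sum: "finite J \<Longrightarrow> avg l (\<lambda>n. \<Sum>j\<in>J. A j n) x = (\<Sum>j\<in>J. avg l (A j) x)"
  unfolding avg_def by (simp add: sum.swap[of _ J] sum_distrib_left)

lemma avg_cmult: "avg l (\<lambda>n. c * A n) x = c * avg l A x"
  unfolding avg_def by (simp add: sum_distrib_left algebra_simps)

lemma avg_norm_le:
  assumes "\<And>n. n \<in> box l (nat \<lfloor>x\<rfloor>) \<Longrightarrow> norm (D n) \<le> b n"
  shows "norm (avg l D x) \<le> x powr (- real l) * (\<Sum>n\<in>box l (nat \<lfloor>x\<rfloor>). b n)"
proof -
  have "norm (avg l D x) = x powr (- real l) * norm (\<Sum>n\<in>box l (nat \<lfloor>x\<rfloor>). D n)"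
    unfolding avg_def by (simp add: norm_mult)
  also have "\<dots> \<le> x powr (- real l) * (\<Sum>n\<in>box l (nat \<lfloor>x\<rfloor>). b n)"
    by (intro mult_left_mono order.trans[OF norm_sum sum_mono] assms) auto
  finally show ?thesis .
qed

lemma sum_ind: "finite A \<Longrightarrow> (\<Sum>n\<in>A. (of_bool (P n) :: 'a :: semiring_1)) = of_nat (card {n\<in>A. P n})"
proof -
  assume "finite A"
  moreover have "A \<inter> {x. P x} = {n\<in>A. P n}" by auto
  ultimately show ?thesis by simp
qed

lemma avg_ind: "avg l (\<lambda>n. of_bool (P n)) x =
    complex_of_real (x powr (- real l) * real (card {n\<in>box l (nat \<lfloor>x\<rfloor>). P n}))"
  unfolding avg_def sum_ind[OF finite_box] by simp

lemma avg_one_lim: "l \<ge> 1 \<Longrightarrow> (avg l (\<lambda>n. 1) \<longlongrightarrow> 1) at_top"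
proof -
  assume l: "l \<ge> 1"
  have "((\<lambda>x. x powr (- real l) * (\<lambda>N. real N ^ l) (nat \<lfloor>x\<rfloor>)) \<longlongrightarrow> 1) at_top"
    by (rule density_limit[OF l, where Bu = 0 and B = 0]) auto
  then have "((\<lambda>x. complex_of_real (x powr (- real l) * real (nat \<lfloor>x\<rfloor>) ^ l)) \<longlongrightarrow> of_real 1) at_top"
    by (intro tendsto_of_real) simp
  moreover have "avg l (\<lambda>n. 1) = (\<lambda>x. complex_of_real (x powr (- real l) * real (nat \<lfloor>x\<rfloor>) ^ l))"
    by (rule ext) (simp add: avg_def card_box)
  ultimately show ?thesis by simp
qed

definition efac :: "(nat \<Rightarrow> complex) \<Rightarrow> nat \<Rightarrow> complex" where
  "efac g p = (1 - 1 / of_nat p) * (1 + (\<Sum>i. g (p ^ Suc i) / of_nat (p ^ Suc i)))"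

lemma efac_props:
  fixes g :: "nat \<Rightarrow> complex" and p :: nat
  assumes p: "p \<ge> 2" and gb: "\<And>\<mu>. norm (g (p ^ \<mu>)) \<le> 1"
  shows "(\<lambda>i. (g (p ^ Suc i) - 1) * (of_real (1 / real p ^ Suc i) - of_real (1 / real p ^ Suc (Suc i))))
            sums (efac g p - 1)"
    and "norm (efac g p - 1) \<le> 2 / real p"
proof -
  define r where "r = 1 / real p"
  define w where "w = (of_real r :: complex)"
  have r0: "0 < r" "r < 1" "r \<le> 1/2" using p unfolding r_def by (auto simp: field_simps)
  have nw: "norm w = r" unfolding w_def using r0 by simp
  have w1: "1 - w \<noteq> 0" unfolding w_def using r0 by (metis of_real_1 of_real_eq_iff right_minus_eq less_irrefl)
  have pw: "1 / of_nat (p ^ Suc i) = w ^ Suc i" for i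
    unfolding w_def r_def by (simp add: power_one_over)
  define t where "t i = (g (p ^ Suc i) - 1) * w ^ Suc i" for i
  have tb: "norm (t i) \<le> 2 * r * r ^ i" for i
  proof -
    have "norm (g (p ^ Suc i) - 1) \<le> 2"
      using gb[of "Suc i"] by (metis norm_one norm_triangle_ineq4 one_add_one add_mono order_refl order.trans)
    then show ?thesis unfolding t_def norm_mult norm_power nw
      using r0 by (simp add: mult_right_mono mult.assoc)
  qed
  have sg: "summable (\<lambda>i. 2 * r * r ^ i)"
    using r0 by (intro summable_mult summable_geometric) auto
  have st: "summable t" by (rule summable_comparison_test'[OF sg tb])
  have snt: "summable (\<lambda>i. norm (t i))" by (rule summable_comparison_test'[OF sg]) (use tb in auto)
  have hg: "(\<lambda>i. w * w ^ i) sums (w * (1 / (1 - w)))"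
    using nw r0 by (intro sums_mult geometric_sums) auto
  have "(\<lambda>i. t i + w * w ^ i) sums (suminf t + w * (1 / (1 - w)))"
    by (intro sums_add summable_sums st hg)
  moreover have "(\<lambda>i. t i + w * w ^ i) = (\<lambda>i. g (p ^ Suc i) / of_nat (p ^ Suc i))"
  proof
    fix i
    have "g (p ^ Suc i) / of_nat (p ^ Suc i) = g (p ^ Suc i) * w ^ Suc i"
      using pw[of i] by (metis mult.right_neutral times_divide_eq_right)
    then show "t i + w * w ^ i = g (p ^ Suc i) / of_nat (p ^ Suc i)"
      unfolding t_def by (simp add: algebra_simps)
  qed
  ultimately have S: "(\<Sum>i. g (p ^ Suc i) / of_nat (p ^ Suc i)) = suminf t + w * (1 / (1 - w))"
    by (simp add: sums_iff)
  have w2: "1 / of_nat p = w" unfolding w_def r_def by simp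
  have E1: "efac g p - 1 = (1 - w) * suminf t"
    unfolding efac_def S w2 using w1 by (simp add: field_simps)
  have "(\<lambda>i. (1 - w) * t i) sums ((1 - w) * suminf t)" by (intro sums_mult summable_sums st)
  moreover have "(\<lambda>i. (1 - w) * t i) = (\<lambda>i. (g (p ^ Suc i) - 1) * (of_real (1 / real p ^ Suc i) - of_real (1 / real p ^ Suc (Suc i))))"
  proof
    fix i
    have "of_real (1 / real p ^ Suc i) = w ^ Suc i" "of_real (1 / real p ^ Suc (Suc i)) = w ^ Suc (Suc i)"
      unfolding w_def r_def by (simp_all add: power_one_over)
    then show "(1 - w) * t i = (g (p ^ Suc i) - 1) * (of_real (1 / real p ^ Suc i) - of_real (1 / real p ^ Suc (Suc i)))"
      unfolding t_def by (simp add: algebra_simps)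
  qed
  ultimately show "(\<lambda>i. (g (p ^ Suc i) - 1) * (of_real (1 / real p ^ Suc i) - of_real (1 / real p ^ Suc (Suc i))))
            sums (efac g p - 1)" unfolding E1 by simp
  have "norm (suminf t) \<le> (\<Sum>i. norm (t i))" by (rule summable_norm[OF snt])
  also have "\<dots> \<le> (\<Sum>i. 2 * r * r ^ i)" by (rule suminf_le[OF tb snt sg])
  also have "\<dots> = 2 * r * (1 / (1 - r))" using r0 by (subst suminf_mult) (auto simp: suminf_geometric)
  finally have nt: "norm (suminf t) \<le> 2 * r * (1 / (1 - r))" .
  have n1w: "norm (1 - w) = 1 - r" unfolding w_def using r0
    by (metis abs_of_pos diff_gt_0_iff_gt norm_of_real of_real_1 of_real_diff)
  have "norm (efac g p - 1) = (1 - r) * norm (suminf t)" unfolding E1 norm_mult n1w ..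
  also have "\<dots> \<le> (1 - r) * (2 * r * (1 / (1 - r)))" using nt r0 by (intro mult_left_mono) auto
  also have "\<dots> = 2 * r" using r0 by (simp add: field_simps)
  finally show "norm (efac g p - 1) \<le> 2 / real p" unfolding r_def by simp
qed

locale mp_ctx =
  fixes p k l :: nat and \<alpha> :: "nat \<Rightarrow> nat \<Rightarrow> nat" and f :: "nat \<Rightarrow> nat \<Rightarrow> complex"
  assumes p: "prime p"
    and fb: "\<And>j \<mu>. j < k \<Longrightarrow> norm (f j (p ^ \<mu>)) \<le> 1"
    and f1: "\<And>j. j < k \<Longrightarrow> f j 1 = 1"
    and nd: "\<And>j. j < k \<Longrightarrow> \<exists>r0\<in>{1..l}. \<not> p dvd \<alpha> j r0"
begin

lemma p2: "p \<ge> 2" using p by (simp add: prime_ge_2_nat)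

lemma L_nz:
  assumes j: "j < k" and n: "n \<in> box l N"
  shows "eval_form \<alpha> l j n \<noteq> 0"
proof -
  obtain r0 where r0: "r0 \<in> {1..l}" "\<not> p dvd \<alpha> j r0" using nd[OF j] by blast
  have a: "\<alpha> j r0 \<ge> 1" using r0 by (cases "\<alpha> j r0") auto
  have "n r0 \<ge> 1" using n r0 unfolding box_def by auto
  then have "\<alpha> j r0 * n r0 \<ge> 1" using a by simp
  moreover have "\<alpha> j r0 * n r0 \<le> (\<Sum>r=1..l. \<alpha> j r * n r)"
    using r0 by (intro member_le_sum) auto
  ultimately have "1 \<le> (\<Sum>r=1..l. \<alpha> j r * n r)" by linarith
  then have "eval_form \<alpha> l j n \<ge> 1" unfolding eval_form_def by linarith
  then show ?thesis by simp
qed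

lemma l_pos: "j < k \<Longrightarrow> l \<ge> 1"
  using nd by fastforce

lemma cop_j:
  assumes "j < k"
  obtains r0 where "r0 \<in> {1..l}" "\<And>\<mu>. coprime (int (p ^ \<mu>)) (int (\<alpha> j r0))"
proof -
  obtain r0 where r0: "r0 \<in> {1..l}" "\<not> p dvd \<alpha> j r0" using nd[OF assms] by blast
  have "coprime p (\<alpha> j r0)" using r0 p by (intro prime_imp_coprime) auto
  then have "coprime (int (p ^ \<mu>)) (int (\<alpha> j r0))" for \<mu> by simp
  then show ?thesis using that r0 by blast
qed

lemma dens_j:
  assumes "j < k"
  shows "((\<lambda>x. x powr (- real l) * real (card {n\<in>box l (nat \<lfloor>x\<rfloor>). p ^ \<mu> dvd eval_form \<alpha> l j n}))
           \<longlongrightarrow> 1 / real p ^ \<mu>) at_top"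
proof -
  obtain r0 where r0: "r0 \<in> {1..l}" "\<And>\<mu>. coprime (int (p ^ \<mu>)) (int (\<alpha> j r0))"
    using cop_j[OF assms] by blast
  have q: "p ^ \<mu> > 0" using p2 by simp
  show ?thesis using C1_density[of r0 l "p^\<mu>" \<alpha> j, OF r0(1) r0(2) q] by simp
qed

lemma up_j:
  assumes "j < k" and x: "x \<ge> 1"
  shows "x powr (- real l) * real (card {n\<in>box l (nat \<lfloor>x\<rfloor>). p ^ \<mu> dvd eval_form \<alpha> l j n})
           \<le> 1 / real p ^ \<mu> + 1 / x"
proof -
  obtain r0 where r0: "r0 \<in> {1..l}" "\<And>\<mu>. coprime (int (p ^ \<mu>)) (int (\<alpha> j r0))"
    using cop_j[OF assms(1)] by blast
  have q: "p ^ \<mu> > 0" using p2 by simp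
  show ?thesis using C1_upper_avg[of r0 l "p^\<mu>" \<alpha> j x, OF r0(1) r0(2) q x] by simp
qed

lemma up_j_ev:
  assumes "j < k"
  shows "eventually (\<lambda>x. x powr (- real l) * real (card {n\<in>box l (nat \<lfloor>x\<rfloor>). p ^ \<mu> dvd eval_form \<alpha> l j n})
           \<le> 2 / real p ^ \<mu>) at_top"
  using eventually_ge_at_top[of "real p ^ \<mu>"]
proof eventually_elim
  case (elim x)
  have pm: "real p ^ \<mu> \<ge> 1" using p2 by (simp add: one_le_power)
  then have x1: "x \<ge> 1" using elim by linarith
  have x0: "x > 0" using x1 by simp
  have "1 / x \<le> 1 / real p ^ \<mu>" using elim pm x0 p2 by (intro divide_left_mono mult_pos_pos) auto
  then show ?case using up_j[OF assms x1, of \<mu>] by simp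
qed

lemma mult_dvd_iff:
  assumes "x \<noteq> 0"
  shows "p ^ \<mu> dvd x \<longleftrightarrow> \<mu> \<le> multiplicity p x"
proof -
  have "p \<noteq> 1" using p by auto
  then show ?thesis using power_dvd_iff_le_multiplicity[of x p \<mu>] assms by simp
qed

lemma stepA:
  assumes j: "j < k"
  shows "(avg l (\<lambda>n. local_part (f j) p (eval_form \<alpha> l j n) - 1) \<longlongrightarrow> efac (f j) p - 1) at_top"
proof -
  define L where "L n = eval_form \<alpha> l j n" for n
  define v where "v n = multiplicity p (L n)" for n
  define c where "c \<mu> = f j (p ^ \<mu>) - 1" for \<mu>
  define F where "F n = local_part (f j) p (L n) - 1" for n
  define ind where "ind \<mu> n = (of_bool (p ^ \<mu> dvd L n) :: complex)" for \<mu> n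
  define G where "G M n = (\<Sum>\<mu>\<in>{1..M}. c \<mu> * (ind \<mu> n - ind (Suc \<mu>) n))" for M n
  define Lv where "Lv M = (\<Sum>\<mu>\<in>{1..M}. c \<mu> * (of_real (1 / real p ^ \<mu>) - of_real (1 / real p ^ Suc \<mu>)))" for M
  define \<eta> where "\<eta> M = 4 / real p ^ Suc M" for M
  have c0: "c 0 = 0" unfolding c_def using f1[OF j] by simp
  have cb: "norm (c \<mu>) \<le> 2" for \<mu>
    unfolding c_def using fb[OF j, of \<mu>] by (metis norm_one norm_triangle_ineq4 one_add_one add_mono order_refl order.trans)
  have avg_ind_lim: "(avg l (ind \<mu>) \<longlongrightarrow> of_real (1 / real p ^ \<mu>)) at_top" for \<mu>
  proof -
    have eq: "avg l (ind \<mu>) = (\<lambda>x. complex_of_real (x powr (- real l) *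
           real (card {n\<in>box l (nat \<lfloor>x\<rfloor>). p ^ \<mu> dvd eval_form \<alpha> l j n})))"
      unfolding ind_def L_def by (rule ext) (rule avg_ind)
    show ?thesis unfolding eq by (rule tendsto_of_real[OF dens_j[OF j, of \<mu>]])
  qed
  have G_lim: "(avg l (G M) \<longlongrightarrow> Lv M) at_top" for M
  proof -
    have "avg l (G M) = (\<lambda>x. \<Sum>\<mu>\<in>{1..M}. c \<mu> * (avg l (ind \<mu>) x - avg l (ind (Suc \<mu>)) x))"
      unfolding G_def by (rule ext) (simp add: avg_sum avg_cmult avg_diff)
    moreover have "((\<lambda>x. \<Sum>\<mu>\<in>{1..M}. c \<mu> * (avg l (ind \<mu>) x - avg l (ind (Suc \<mu>)) x)) \<longlongrightarrow> Lv M) at_top"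
      unfolding Lv_def by (intro tendsto_sum tendsto_mult tendsto_const tendsto_diff avg_ind_lim)
    ultimately show ?thesis by simp
  qed
  have pw: "norm (F n - G M n) \<le> 2 * of_bool (p ^ Suc M dvd L n)" if n: "n \<in> box l (nat \<lfloor>x\<rfloor>)" for n M x
  proof -
    have Lnz: "L n \<noteq> 0" unfolding L_def by (rule L_nz[OF j n])
    have indv: "ind \<mu> n = of_bool (\<mu> \<le> v n)" for \<mu>
      unfolding ind_def v_def using mult_dvd_iff[OF Lnz] by simp
    have "G M n = (\<Sum>\<mu>\<in>{1..M}. if v n = \<mu> then c \<mu> else 0)"
      unfolding G_def indv by (intro sum.cong) auto
    also have "\<dots> = (if v n \<in> {1..M} then c (v n) else 0)" by simp
    finally have Gv: "G M n = (if v n \<in> {1..M} then c (v n) else 0)" .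
    have Fv: "F n = c (v n)" unfolding F_def c_def local_part_def v_def by simp
    show ?thesis
    proof (cases "M < v n")
      case True
      then have "Suc M \<le> v n" by simp
      then have "p ^ Suc M dvd L n" using mult_dvd_iff[OF Lnz, of "Suc M"] unfolding v_def by blast
      then show ?thesis using Gv Fv True cb[of "v n"] by simp
    next
      case False
      then have "F n - G M n = 0" using Gv Fv c0 by (cases "v n = 0") auto
      then show ?thesis by simp
    qed
  qed
  have E: "eventually (\<lambda>x. norm (avg l F x - avg l (G M) x) \<le> \<eta> M) at_top" for M
    using up_j_ev[OF j, of "Suc M"]
  proof eventually_elim
    case (elim x)
    have "norm (avg l F x - avg l (G M) x) = norm (avg l (\<lambda>n. F n - G M n) x)" by (simp add: avg_diff)
    also have "\<dots> \<le> x powr (- real l) * (\<Sum>n\<in>box l (nat \<lfloor>x\<rfloor>). 2 * of_bool (p ^ Suc M dvd L n))"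
      by (rule avg_norm_le) (rule pw)
    also have "\<dots> = 2 * (x powr (- real l) * real (card {n\<in>box l (nat \<lfloor>x\<rfloor>). p ^ Suc M dvd eval_form \<alpha> l j n}))"
      unfolding sum_distrib_left[symmetric] sum_ind[OF finite_box] L_def by simp
    also have "\<dots> \<le> 2 * (2 / real p ^ Suc M)" using elim by simp
    finally show ?case unfolding \<eta>_def by simp
  qed
  have eta: "\<eta> \<longlonglongrightarrow> 0"
  proof -
    have "(\<lambda>M. 4 * (1 / real p) * (1 / real p) ^ M) \<longlonglongrightarrow> 4 * (1 / real p) * 0"
      using p2 by (intro tendsto_mult tendsto_const LIMSEQ_power_zero) auto
    moreover have "(\<lambda>M. 4 * (1 / real p) * (1 / real p) ^ M) = \<eta>"
      unfolding \<eta>_def by (rule ext) (simp add: power_one_over)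
    ultimately show ?thesis by simp
  qed
  obtain L0 where L0: "(avg l F \<longlongrightarrow> L0) at_top" "Lv \<longlonglongrightarrow> L0"
    using approx_conv[OF G_lim E eta] by blast
  have "Lv \<longlonglongrightarrow> efac (f j) p - 1"
  proof -
    have sm: "(\<lambda>i. c (Suc i) * (of_real (1 / real p ^ Suc i) - of_real (1 / real p ^ Suc (Suc i))))
            sums (efac (f j) p - 1)"
      unfolding c_def by (rule efac_props(1)[of p "f j", OF p2 fb[OF j]])
    have "Lv M = (\<Sum>i<M. c (Suc i) * (of_real (1 / real p ^ Suc i) - of_real (1 / real p ^ Suc (Suc i))))" for M
    proof -
      have "{1..M} = Suc ` {..<M}" by (auto simp: image_iff) (metis Suc_pred lessThan_iff not_less_eq_eq less_Suc_eq_le One_nat_def le_simps(3))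
      then show ?thesis unfolding Lv_def by (simp add: sum.reindex)
    qed
    then have "Lv = (\<lambda>M. \<Sum>i<M. c (Suc i) * (of_real (1 / real p ^ Suc i) - of_real (1 / real p ^ Suc (Suc i))))"
      by (rule ext)
    then show ?thesis using sm unfolding sums_def by simp
  qed
  then have "L0 = efac (f j) p - 1" using L0(2) LIMSEQ_unique by blast
  then show ?thesis using L0(1) unfolding F_def L_def by simp
qed

end

lemma eval_mod:
  assumes "\<forall>r\<in>{1..l}. n r mod q = n' r mod q"
  shows "eval_form \<alpha> l j n mod q = eval_form \<alpha> l j n' mod q"
proof -
  have "(\<Sum>r=1..l. \<alpha> j r * n r) mod q = (\<Sum>r=1..l. (\<alpha> j r * n r) mod q) mod q"
    by (simp add: mod_sum_eq)
  also have "(\<Sum>r=1..l. (\<alpha> j r * n r) mod q) = (\<Sum>r=1..l. (\<alpha> j r * n' r) mod q)"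
  proof (rule sum.cong[OF refl])
    fix r assume "r \<in> {1..l}"
    then have "n r mod q = n' r mod q" using assms by blast
    then show "(\<alpha> j r * n r) mod q = (\<alpha> j r * n' r) mod q"
      by (metis mod_mult_right_eq)
  qed
  also have "(\<Sum>r=1..l. (\<alpha> j r * n' r) mod q) mod q = (\<Sum>r=1..l. \<alpha> j r * n' r) mod q"
    by (simp add: mod_sum_eq)
  finally have "(\<Sum>r=1..l. \<alpha> j r * n r) mod q = (\<Sum>r=1..l. \<alpha> j r * n' r) mod q" .
  then show ?thesis unfolding eval_form_def by (metis mod_add_right_eq)
qed

context mp_ctx
begin

lemma gcd_pow:
  fixes L :: nat
  assumes L: "L \<noteq> 0" and nd1: "\<not> p ^ Suc T dvd L"
  shows "gcd L (p ^ T) = p ^ multiplicity p L"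
proof -
  define v where "v = multiplicity p L"
  have vT: "v \<le> T" using nd1 mult_dvd_iff[OF L, of "Suc T"] unfolding v_def by simp
  have d1: "p ^ v dvd L" using mult_dvd_iff[OF L, of v] unfolding v_def by simp
  have d2: "p ^ v dvd p ^ T" using vT by (rule le_imp_power_dvd)
  have "gcd L (p ^ T) dvd p ^ T" by simp
  then obtain i where i: "i \<le> T" "gcd L (p ^ T) = p ^ i" using divides_primepow_nat[OF p] by blast
  have "p ^ i dvd L" using i(2) by (metis gcd_dvd1)
  then have "i \<le> v" using mult_dvd_iff[OF L, of i] unfolding v_def by simp
  have "p ^ v dvd p ^ i" using d1 d2 i(2) by (metis gcd_greatest)
  then have "v \<le> i"
    using mult_dvd_iff[of "p ^ i" v] p by (simp add: prime_elem_multiplicity_eq_zero_iff)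
  then show ?thesis using \<open>i \<le> v\<close> i(2) v_def by simp
qed

lemma gcd_norm:
  assumes j: "j < k"
  shows "norm (f j (gcd L (p ^ T))) \<le> 1"
proof -
  have "gcd L (p ^ T) dvd p ^ T" by simp
  then obtain i where "gcd L (p ^ T) = p ^ i" using divides_primepow_nat[OF p] by blast
  then show ?thesis using fb[OF j] by simp
qed

lemma lp_norm:
  assumes j: "j < k"
  shows "norm (local_part (f j) p L) \<le> 1"
  unfolding local_part_def using fb[OF j] by simp

lemma stepB:
  "\<exists>M0. (avg l (\<lambda>n. \<Prod>j<k. local_part (f j) p (eval_form \<alpha> l j n)) \<longlongrightarrow> M0) at_top"
proof -
  define g where "g n = (\<Prod>j<k. local_part (f j) p (eval_form \<alpha> l j n))" for n
  define gT where "gT T n = (\<Prod>j<k. f j (gcd (eval_form \<alpha> l j n) (p ^ T)))" for T n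
  define \<eta> where "\<eta> T = 4 * real k / real p ^ Suc T" for T
  have p0: "p > 0" using p2 by simp
  have per: "\<exists>L. (avg l (gT T) \<longlongrightarrow> L) at_top" for T
  proof (rule periodic_conv)
    show "p ^ T > 0" using p0 by simp
    fix n n' assume rr: "\<forall>r\<in>{1..l}. n r mod p ^ T = n' r mod p ^ T"
    have "gcd (eval_form \<alpha> l j n) (p ^ T) = gcd (eval_form \<alpha> l j n') (p ^ T)" for j
    proof -
      have pt: "p ^ T \<noteq> 0" using p0 by simp
      have "gcd (eval_form \<alpha> l j n) (p ^ T) = gcd (eval_form \<alpha> l j n mod p ^ T) (p ^ T)"
        using gcd_mod_left[OF pt] by simp
      also have "\<dots> = gcd (eval_form \<alpha> l j n' mod p ^ T) (p ^ T)" using eval_mod[OF rr] by simp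
      also have "\<dots> = gcd (eval_form \<alpha> l j n') (p ^ T)" using gcd_mod_left[OF pt] by simp
      finally show ?thesis .
    qed
    then show "gT T n = gT T n'" unfolding gT_def by simp
  qed
  define Lv where "Lv T = (SOME L. (avg l (gT T) \<longlongrightarrow> L) at_top)" for T
  have G: "(avg l (gT T) \<longlongrightarrow> Lv T) at_top" for T
    unfolding Lv_def using someI_ex[OF per[of T]] .
  have pw: "norm (g n - gT T n) \<le> (\<Sum>j<k. 2 * of_bool (p ^ Suc T dvd eval_form \<alpha> l j n))"
    if n: "n \<in> box l N" for n T N
  proof -
    have "norm (g n - gT T n) \<le> (\<Sum>j<k. norm (local_part (f j) p (eval_form \<alpha> l j n) - f j (gcd (eval_form \<alpha> l j n) (p ^ T))))"
      unfolding g_def gT_def by (rule norm_prod_diff) (simp_all add: lp_norm gcd_norm)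
    also have "\<dots> \<le> (\<Sum>j<k. 2 * of_bool (p ^ Suc T dvd eval_form \<alpha> l j n))"
    proof (rule sum_mono)
      fix j assume j: "j \<in> {..<k}"
      show "norm (local_part (f j) p (eval_form \<alpha> l j n) - f j (gcd (eval_form \<alpha> l j n) (p ^ T)))
            \<le> 2 * of_bool (p ^ Suc T dvd eval_form \<alpha> l j n)"
      proof (cases "p ^ Suc T dvd eval_form \<alpha> l j n")
        case True
        have "norm (local_part (f j) p (eval_form \<alpha> l j n) - f j (gcd (eval_form \<alpha> l j n) (p ^ T)))
             \<le> norm (local_part (f j) p (eval_form \<alpha> l j n)) + norm (f j (gcd (eval_form \<alpha> l j n) (p ^ T)))"
          by (rule norm_triangle_ineq4)
        also have "\<dots> \<le> 1 + 1" using j by (intro add_mono lp_norm gcd_norm) auto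
        finally show ?thesis using True by simp
      next
        case False
        have Lnz: "eval_form \<alpha> l j n \<noteq> 0" using L_nz[of j n] j n by simp
        show ?thesis using gcd_pow[OF Lnz False] False unfolding local_part_def by simp
      qed
    qed
    finally show ?thesis .
  qed
  have E: "eventually (\<lambda>x. norm (avg l g x - avg l (gT T) x) \<le> \<eta> T) at_top" for T
  proof -
    have "eventually (\<lambda>x. \<forall>j\<in>{..<k}. x powr (- real l) *
           real (card {n\<in>box l (nat \<lfloor>x\<rfloor>). p ^ Suc T dvd eval_form \<alpha> l j n}) \<le> 2 / real p ^ Suc T) at_top"
      by (intro eventually_ball_finite ballI up_j_ev) auto
    then show ?thesis
    proof eventually_elim
      case (elim x)
      have "norm (avg l g x - avg l (gT T) x) = norm (avg l (\<lambda>n. g n - gT T n) x)" by (simp add: avg_diff)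
      also have "\<dots> \<le> x powr (- real l) * (\<Sum>n\<in>box l (nat \<lfloor>x\<rfloor>). \<Sum>j<k. 2 * of_bool (p ^ Suc T dvd eval_form \<alpha> l j n))"
        by (rule avg_norm_le) (rule pw)
      also have "(\<Sum>n\<in>box l (nat \<lfloor>x\<rfloor>). \<Sum>j<k. 2 * (of_bool (p ^ Suc T dvd eval_form \<alpha> l j n) :: real))
          = (\<Sum>j<k. 2 * real (card {n\<in>box l (nat \<lfloor>x\<rfloor>). p ^ Suc T dvd eval_form \<alpha> l j n}))"
        by (subst sum.swap) (simp add: sum_distrib_left[symmetric] sum_ind[OF finite_box])
      also have "x powr (- real l) * (\<Sum>j<k. 2 * real (card {n\<in>box l (nat \<lfloor>x\<rfloor>). p ^ Suc T dvd eval_form \<alpha> l j n}))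
          = (\<Sum>j<k. 2 * (x powr (- real l) * real (card {n\<in>box l (nat \<lfloor>x\<rfloor>). p ^ Suc T dvd eval_form \<alpha> l j n})))"
        by (simp add: sum_distrib_left mult.left_commute)
      also have "\<dots> \<le> (\<Sum>j<k. 2 * (2 / real p ^ Suc T))"
        using elim by (intro sum_mono mult_left_mono) auto
      also have "\<dots> = \<eta> T" unfolding \<eta>_def by simp
      finally show ?case .
    qed
  qed
  have eta: "\<eta> \<longlonglongrightarrow> 0"
  proof -
    have "(\<lambda>T. 4 * real k * (1 / real p) * (1 / real p) ^ T) \<longlonglongrightarrow> 4 * real k * (1 / real p) * 0"
      using p2 by (intro tendsto_mult tendsto_const LIMSEQ_power_zero) auto
    moreover have "(\<lambda>T. 4 * real k * (1 / real p) * (1 / real p) ^ T) = \<eta>"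
      unfolding \<eta>_def by (rule ext) (simp add: power_one_over)
    ultimately show ?thesis by simp
  qed
  show ?thesis using approx_conv[OF G E eta] unfolding g_def by blast
qed

end

context mp_ctx
begin

lemma lp_one:
  assumes "j < k" "\<not> p dvd L"
  shows "local_part (f j) p L = 1"
  using assms f1 unfolding local_part_def by (simp add: not_dvd_imp_multiplicity_0)

lemma R_bound:
  assumes n: "n \<in> box l N"
  shows "norm ((\<Prod>j<k. local_part (f j) p (eval_form \<alpha> l j n)) - 1
            - (\<Sum>j<k. local_part (f j) p (eval_form \<alpha> l j n) - 1))
      \<le> (2 + 2 * real k) * (\<Sum>i<k. \<Sum>j\<in>{..<k} - {i}. of_bool (p dvd eval_form \<alpha> l i n \<and> p dvd eval_form \<alpha> l j n))"
proof -
  define F where "F j = local_part (f j) p (eval_form \<alpha> l j n)" for j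
  define S where "S = {j\<in>{..<k}. F j \<noteq> 1}"
  have SF: "p dvd eval_form \<alpha> l j n" if "j \<in> S" for j
    using that lp_one unfolding S_def F_def by blast
  have Fn: "norm (F j) \<le> 1" if "j < k" for j unfolding F_def by (rule lp_norm[OF that])
  have RHS0: "0 \<le> (\<Sum>i<k. \<Sum>j\<in>{..<k} - {i}. (of_bool (p dvd eval_form \<alpha> l i n \<and> p dvd eval_form \<alpha> l j n) :: real))"
    by (intro sum_nonneg) auto
  show ?thesis
  proof (cases "\<exists>i\<in>S. \<exists>j\<in>S. i \<noteq> j")
    case True
    then obtain i j where ij: "i \<in> S" "j \<in> S" "i \<noteq> j" by blast
    have ik: "i < k" "j < k" using ij unfolding S_def by auto
    have "(1::real) \<le> (\<Sum>j'\<in>{..<k} - {i}. of_bool (p dvd eval_form \<alpha> l i n \<and> p dvd eval_form \<alpha> l j' n))"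
    proof -
      have "(1::real) = of_bool (p dvd eval_form \<alpha> l i n \<and> p dvd eval_form \<alpha> l j n)" using SF ij by simp
      also have "\<dots> \<le> (\<Sum>j'\<in>{..<k} - {i}. of_bool (p dvd eval_form \<alpha> l i n \<and> p dvd eval_form \<alpha> l j' n))"
        using ij ik by (intro member_le_sum) auto
      finally show ?thesis .
    qed
    also have "\<dots> \<le> (\<Sum>i<k. \<Sum>j\<in>{..<k} - {i}. of_bool (p dvd eval_form \<alpha> l i n \<and> p dvd eval_form \<alpha> l j n))"
      apply (rule member_le_sum)
      using ik apply simp
       apply (rule sum_nonneg)
       apply simp
      apply simp
      done
    finally have one: "(1::real) \<le> (\<Sum>i<k. \<Sum>j\<in>{..<k} - {i}. of_bool (p dvd eval_form \<alpha> l i n \<and> p dvd eval_form \<alpha> l j n))" .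
    have ng: "norm (\<Prod>j<k. F j) \<le> 1"
    proof -
      have "norm (\<Prod>j<k. F j) \<le> (\<Prod>j<k. norm (F j))" by (rule norm_prod_le)
      also have "\<dots> \<le> 1" using Fn by (intro prod_le_1) auto
      finally show ?thesis .
    qed
    have ns: "norm (\<Sum>j<k. F j - 1) \<le> 2 * real k"
    proof -
      have "norm (\<Sum>j<k. F j - 1) \<le> (\<Sum>j<k. norm (F j - 1))" by (rule norm_sum)
      also have "\<dots> \<le> (\<Sum>j<k. 2)"
      proof (rule sum_mono)
        fix j assume "j \<in> {..<k}"
        then have "norm (F j) \<le> 1" using Fn by simp
        then show "norm (F j - 1) \<le> 2" using norm_triangle_ineq4[of "F j" 1] by simp
      qed
      finally show ?thesis by simp
    qed
    have "norm ((\<Prod>j<k. F j) - 1 - (\<Sum>j<k. F j - 1)) \<le> norm (\<Prod>j<k. F j) + 1 + norm (\<Sum>j<k. F j - 1)"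
    proof -
      have "norm ((\<Prod>j<k. F j) - 1 - (\<Sum>j<k. F j - 1)) \<le> norm ((\<Prod>j<k. F j) - 1) + norm (\<Sum>j<k. F j - 1)"
        by (rule norm_triangle_ineq4)
      moreover have "norm ((\<Prod>j<k. F j) - 1) \<le> norm (\<Prod>j<k. F j) + norm (1::complex)"
        by (rule norm_triangle_ineq4)
      ultimately show ?thesis by simp
    qed
    also have "\<dots> \<le> 2 + 2 * real k" using ng ns by simp
    also have "\<dots> \<le> (2 + 2 * real k) * (\<Sum>i<k. \<Sum>j\<in>{..<k} - {i}. of_bool (p dvd eval_form \<alpha> l i n \<and> p dvd eval_form \<alpha> l j n))"
      using mult_left_mono[OF one, of "2 + 2 * real k"] by simp
    finally show ?thesis unfolding F_def .
  next
    case False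
    have fS: "finite S" unfolding S_def by simp
    have Ssub: "S \<subseteq> {..<k}" unfolding S_def by auto
    have P: "(\<Prod>j<k. F j) = (\<Prod>j\<in>S. F j)"
      by (rule prod.mono_neutral_right) (auto simp: S_def)
    have Sm: "(\<Sum>j<k. F j - 1) = (\<Sum>j\<in>S. F j - 1)"
      by (rule sum.mono_neutral_right) (auto simp: S_def)
    have "(\<Prod>j\<in>S. F j) - 1 - (\<Sum>j\<in>S. F j - 1) = 0"
    proof (cases "S = {}")
      case True then show ?thesis by simp
    next
      case False
      then obtain j0 where j0: "j0 \<in> S" by blast
      then have "S = {j0}" using \<open>\<not> (\<exists>i\<in>S. \<exists>j\<in>S. i \<noteq> j)\<close> by blast
      then show ?thesis by simp
    qed
    then have "norm ((\<Prod>j<k. F j) - 1 - (\<Sum>j<k. F j - 1)) = 0" unfolding P Sm by simp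
    then show ?thesis unfolding F_def using RHS0 by simp
  qed
qed

lemma Mp_est:
  assumes pair: "\<And>i j N. i < k \<Longrightarrow> j < k \<Longrightarrow> i \<noteq> j \<Longrightarrow> N \<ge> 1 \<Longrightarrow>
      real (card {n\<in>box l N. p dvd eval_form \<alpha> l i n \<and> p dvd eval_form \<alpha> l j n})
        \<le> (1 / real p ^ 2) * real N ^ l + 3 * real N ^ (l - 1)"
    and kp: "2 * k \<le> p" and k0: "k > 0"
  shows "norm (M_p k l f \<alpha> p - (\<Prod>j<k. efac (f j) p)) \<le> 8 * (real k + 1) ^ 3 / real p ^ 2"
proof -
  define F where "F j n = local_part (f j) p (eval_form \<alpha> l j n)" for j n
  define g where "g n = (\<Prod>j<k. F j n)" for n
  define R where "R n = g n - 1 - (\<Sum>j<k. F j n - 1)" for n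
  define ind where "ind i j n = (of_bool (p dvd eval_form \<alpha> l i n \<and> p dvd eval_form \<alpha> l j n) :: real)" for i j n
  have l: "l \<ge> 1" using l_pos[OF k0] .
  have p0: "real p > 0" using p2 by simp
  obtain M0 where M0: "(avg l g \<longlongrightarrow> M0) at_top" using stepB unfolding g_def F_def by blast
  have Mp: "M_p k l f \<alpha> p = M0"
  proof -
    have "(\<lambda>x. complex_of_real (x powr (- real l)) *
      (\<Sum>n\<in>PiE {1..l} (\<lambda>_. {1..nat \<lfloor>x\<rfloor>}). \<Prod>j<k. local_part (f j) p (eval_form \<alpha> l j n))) = avg l g"
      by (rule ext) (simp add: avg_def box_def g_def F_def)
    then show ?thesis unfolding M_p_def using tendsto_Lim[OF _ M0] by simp
  qed
  have Rlim: "(avg l R \<longlongrightarrow> M0 - 1 - (\<Sum>j<k. efac (f j) p - 1)) at_top"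
  proof -
    have "avg l R = (\<lambda>x. avg l g x - avg l (\<lambda>n. 1) x - (\<Sum>j<k. avg l (\<lambda>n. F j n - 1) x))"
    proof
      fix x
      have "avg l R x = avg l (\<lambda>n. g n - 1) x - avg l (\<lambda>n. \<Sum>j<k. F j n - 1) x"
        unfolding R_def by (rule avg_diff)
      also have "avg l (\<lambda>n. g n - 1) x = avg l g x - avg l (\<lambda>n. 1) x" by (rule avg_diff)
      also have "avg l (\<lambda>n. \<Sum>j<k. F j n - 1) x = (\<Sum>j<k. avg l (\<lambda>n. F j n - 1) x)"
        by (rule avg_sum) simp
      finally show "avg l R x = avg l g x - avg l (\<lambda>n. 1) x - (\<Sum>j<k. avg l (\<lambda>n. F j n - 1) x)" .
    qed
    moreover have "((\<lambda>x. avg l g x - avg l (\<lambda>n. 1) x - (\<Sum>j<k. avg l (\<lambda>n. F j n - 1) x))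
        \<longlongrightarrow> M0 - 1 - (\<Sum>j<k. efac (f j) p - 1)) at_top"
      unfolding F_def by (intro tendsto_diff tendsto_sum M0 avg_one_lim l stepA) auto
    ultimately show ?thesis by simp
  qed
  define B where "B = (2 + 2 * real k) * (real k * real k) * (2 / real p ^ 2)"
  have Rev: "eventually (\<lambda>x. norm (avg l R x) \<le> B) at_top"
    using eventually_ge_at_top[of "max 1 (3 * real p ^ 2)"]
  proof eventually_elim
    case (elim x)
    have x1: "x \<ge> 1" and x3: "x \<ge> 3 * real p ^ 2" using elim by auto
    have x3': "3 / x \<le> 1 / real p ^ 2" using x3 p0 x1 by (simp add: field_simps)
    have cb: "x powr (- real l) * real (card {n\<in>box l (nat \<lfloor>x\<rfloor>). p dvd eval_form \<alpha> l i n \<and> p dvd eval_form \<alpha> l j n})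
        \<le> 2 / real p ^ 2" if "i < k" "j < k" "i \<noteq> j" for i j
    proof -
      have "x powr (- real l) * (\<lambda>N. real (card {n\<in>box l N. p dvd eval_form \<alpha> l i n \<and> p dvd eval_form \<alpha> l j n})) (nat \<lfloor>x\<rfloor>)
          \<le> 1 / real p ^ 2 + 3 / x"
        by (rule upper_density[OF l _ _ pair[OF that] x1]) auto
      then show ?thesis using x3' by simp
    qed
    have bnd0: "(\<Sum>i<k. \<Sum>j\<in>{..<k} - {i}. 2 / real p ^ 2) \<le> (\<Sum>i<k. real k * (2 / real p ^ 2))"
    proof (rule sum_mono)
      fix i assume "i \<in> {..<k}"
      have "card ({..<k} - {i}) \<le> card {..<k}" by (rule card_mono) auto
      then have "real (card ({..<k} - {i})) \<le> real k" by simp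
      then have "real (card ({..<k} - {i})) * (2 / real p ^ 2) \<le> real k * (2 / real p ^ 2)"
        using p0 by (intro mult_right_mono) auto
      then show "(\<Sum>j\<in>{..<k} - {i}. 2 / real p ^ 2) \<le> real k * (2 / real p ^ 2)"
        by (simp only: sum_constant of_nat_mult)
    qed
    also have "(\<Sum>i<k. real k * (2 / real p ^ 2)) = real k * real k * (2 / real p ^ 2)" by simp
    finally have bnd1: "(\<Sum>i<k. \<Sum>j\<in>{..<k} - {i}. 2 / real p ^ 2) \<le> real k * real k * (2 / real p ^ 2)" .
    then have "(2 + 2 * real k) * (\<Sum>i<k. \<Sum>j\<in>{..<k} - {i}. 2 / real p ^ 2)
        \<le> (2 + 2 * real k) * (real k * real k * (2 / real p ^ 2))" by (rule mult_left_mono) simp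
    then have bnd: "(2 + 2 * real k) * (\<Sum>i<k. \<Sum>j\<in>{..<k} - {i}. 2 / real p ^ 2) \<le> B"
      unfolding B_def by (simp only: mult.assoc)
    have "norm (avg l R x) \<le> x powr (- real l) * (\<Sum>n\<in>box l (nat \<lfloor>x\<rfloor>). (2 + 2 * real k) * (\<Sum>i<k. \<Sum>j\<in>{..<k} - {i}. ind i j n))"
      by (rule avg_norm_le) (unfold R_def g_def F_def ind_def, rule R_bound)
    also have "\<dots> = (2 + 2 * real k) * (\<Sum>i<k. \<Sum>j\<in>{..<k} - {i}. x powr (- real l) *
        real (card {n\<in>box l (nat \<lfloor>x\<rfloor>). p dvd eval_form \<alpha> l i n \<and> p dvd eval_form \<alpha> l j n}))"
    proof -
      have "(\<Sum>n\<in>box l (nat \<lfloor>x\<rfloor>). (2 + 2 * real k) * (\<Sum>i<k. \<Sum>j\<in>{..<k} - {i}. ind i j n))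
         = (2 + 2 * real k) * (\<Sum>i<k. \<Sum>j\<in>{..<k} - {i}. \<Sum>n\<in>box l (nat \<lfloor>x\<rfloor>). ind i j n)"
        by (simp add: sum_distrib_left[symmetric] sum.swap[of _ "box l (nat \<lfloor>x\<rfloor>)"])
      also have "\<dots> = (2 + 2 * real k) * (\<Sum>i<k. \<Sum>j\<in>{..<k} - {i}.
          real (card {n\<in>box l (nat \<lfloor>x\<rfloor>). p dvd eval_form \<alpha> l i n \<and> p dvd eval_form \<alpha> l j n}))"
        unfolding ind_def sum_ind[OF finite_box] by simp
      finally show ?thesis by (simp add: sum_distrib_left mult.left_commute)
    qed
    also have "\<dots> \<le> (2 + 2 * real k) * (\<Sum>i<k. \<Sum>j\<in>{..<k} - {i}. 2 / real p ^ 2)"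
      using cb by (intro mult_left_mono sum_mono) auto
    also have "\<dots> \<le> B" by (rule bnd)
    finally show ?case .
  qed
  have n1: "norm (M0 - 1 - (\<Sum>j<k. efac (f j) p - 1)) \<le> B"
    by (rule tendsto_upperbound[OF tendsto_norm[OF Rlim] Rev]) simp
  have es: "(\<Sum>j<k. norm (efac (f j) p - 1)) \<le> real k * (2 / real p)"
  proof -
    have "(\<Sum>j<k. norm (efac (f j) p - 1)) \<le> (\<Sum>j<k. 2 / real p)"
      by (intro sum_mono efac_props(2)[OF p2]) (use fb in auto)
    then show ?thesis by simp
  qed
  have es1: "real k * (2 / real p) \<le> 1" using kp p0 by (simp add: field_simps)
  have n2: "norm ((\<Prod>j<k. efac (f j) p) - 1 - (\<Sum>j<k. efac (f j) p - 1)) \<le> (real k * (2 / real p))\<^sup>2"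
  proof -
    have "norm ((\<Prod>j<k. 1 + (efac (f j) p - 1)) - 1 - (\<Sum>j<k. efac (f j) p - 1))
        \<le> (\<Sum>j<k. norm (efac (f j) p - 1))\<^sup>2"
      by (rule prod_second_order) (use es es1 in auto)
    also have "\<dots> \<le> (real k * (2 / real p))\<^sup>2" using es by (intro power_mono sum_nonneg) auto
    finally show ?thesis by simp
  qed
  have "norm (M0 - (\<Prod>j<k. efac (f j) p)) \<le>
      norm (M0 - 1 - (\<Sum>j<k. efac (f j) p - 1)) + norm ((\<Prod>j<k. efac (f j) p) - 1 - (\<Sum>j<k. efac (f j) p - 1))"
    using norm_triangle_ineq4[of "M0 - 1 - (\<Sum>j<k. efac (f j) p - 1)" "(\<Prod>j<k. efac (f j) p) - 1 - (\<Sum>j<k. efac (f j) p - 1)"]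
    by simp
  also have "\<dots> \<le> B + (real k * (2 / real p))\<^sup>2" using n1 n2 by simp
  also have "\<dots> = (4 * real k ^ 3 + 8 * real k ^ 2) / real p ^ 2"
    unfolding B_def using p0 by (simp add: field_simps power2_eq_square power3_eq_cube)
  also have "\<dots> \<le> 8 * (real k + 1) ^ 3 / real p ^ 2"
  proof (rule divide_right_mono)
    have "(real k + 1) ^ 3 = real k ^ 3 + 3 * real k ^ 2 + 3 * real k + 1"
      by (simp add: power3_eq_cube power2_eq_square algebra_simps)
    moreover have "real k ^ 3 \<ge> 0" "real k ^ 2 \<ge> 0" by auto
    ultimately show "4 * real k ^ 3 + 8 * real k ^ 2 \<le> 8 * (real k + 1) ^ 3" by linarith
  qed auto
  finally show ?thesis unfolding Mp .
qed

end

lemma efac_small: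
  fixes g :: "nat \<Rightarrow> complex" and p m :: nat
  assumes p: "p \<ge> 2" and gb: "\<And>\<mu>. norm (g (p ^ \<mu>)) \<le> 1" and m: "m \<ge> 1"
    and g1: "\<And>\<mu>. 1 \<le> \<mu> \<Longrightarrow> \<mu> < m \<Longrightarrow> g (p ^ \<mu>) = 1"
  shows "norm (efac g p - 1) \<le> 4 / real p ^ m"
proof -
  define tm where "tm i = (g (p ^ Suc i) - 1) * (of_real (1 / real p ^ Suc i) - of_real (1 / real p ^ Suc (Suc i)))" for i
  have sm: "tm sums (efac g p - 1)" unfolding tm_def by (rule efac_props(1)[of p g, OF p gb])
  have z: "(\<Sum>i<m - 1. tm i) = 0"
  proof (rule sum.neutral, rule ballI)
    fix i assume "i \<in> {..<m - 1}"
    then have "g (p ^ Suc i) = 1" using g1[of "Suc i"] by auto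
    then show "tm i = 0" unfolding tm_def by simp
  qed
  have sh: "(\<lambda>t. tm (t + (m - 1))) sums (efac g p - 1)"
    using sums_split_initial_segment[OF sm, of "m - 1"] z by simp
  define r where "r = 1 / real p"
  have r0: "0 < r" "r \<le> 1/2" using p unfolding r_def by (auto simp: field_simps)
  define bd where "bd t = 2 * r ^ m * r ^ t" for t
  have tb: "norm (tm (t + (m - 1))) \<le> bd t" for t
  proof -
    have e: "Suc (t + (m - 1)) = t + m" using m by simp
    have a1: "0 \<le> 1 / real p ^ (t + m) - 1 / real p ^ Suc (t + m)" using p
      by (simp add: field_simps)
    have a2: "1 / real p ^ (t + m) - 1 / real p ^ Suc (t + m) \<le> 1 / real p ^ (t + m)" by simp
    have "norm (of_real (1 / real p ^ (t + m)) - of_real (1 / real p ^ Suc (t + m)) :: complex)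
        = \<bar>1 / real p ^ (t + m) - 1 / real p ^ Suc (t + m)\<bar>"
      by (metis norm_of_real of_real_diff)
    also have "\<dots> \<le> 1 / real p ^ (t + m)" using a1 a2 by simp
    finally have n1: "norm (of_real (1 / real p ^ (t + m)) - of_real (1 / real p ^ Suc (t + m)) :: complex)
        \<le> 1 / real p ^ (t + m)" .
    have n2: "norm (g (p ^ (t + m)) - 1) \<le> 2"
      using gb[of "t + m"] norm_triangle_ineq4[of "g (p ^ (t + m))" 1] by simp
    have "norm (tm (t + (m - 1))) \<le> 2 * (1 / real p ^ (t + m))"
      unfolding tm_def e norm_mult using n1 n2 by (intro mult_mono) auto
    also have "\<dots> = bd t" unfolding bd_def r_def by (simp add: power_add power_one_over)
    finally show ?thesis .
  qed
  have sbd: "summable bd" unfolding bd_def using r0 by (intro summable_mult summable_geometric) auto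
  have snt: "summable (\<lambda>t. norm (tm (t + (m - 1))))" by (rule summable_comparison_test'[OF sbd]) (use tb in auto)
  have "efac g p - 1 = (\<Sum>t. tm (t + (m - 1)))" using sh by (simp add: sums_iff)
  then have "norm (efac g p - 1) \<le> (\<Sum>t. norm (tm (t + (m - 1))))" using summable_norm[OF snt] by simp
  also have "\<dots> \<le> (\<Sum>t. bd t)" by (rule suminf_le[OF tb snt sbd])
  also have "\<dots> = 2 * r ^ m * (1 / (1 - r))" unfolding bd_def using r0
    by (subst suminf_mult) (auto simp: suminf_geometric)
  also have "\<dots> \<le> 2 * r ^ m * 2"
  proof -
    have "1 / (1 - r) \<le> 2" using r0 by (simp add: field_simps)
    then show ?thesis using r0 by (intro mult_left_mono) auto
  qed
  also have "\<dots> = 4 / real p ^ m" unfolding r_def by (simp add: power_one_over)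
  finally show ?thesis .
qed

lemma inv_sq_tel:
  fixes s M :: nat assumes "s \<ge> 1" "M \<ge> s"
  shows "(\<Sum>n\<in>{s<..M}. 1 / real n ^ 2) \<le> 1 / real s - 1 / real M"
  using assms(2)
proof (induction M rule: nat_induct_at_least)
  case base then show ?case by simp
next
  case (Suc M)
  have M1: "M \<ge> 1" using Suc assms by simp
  have "{s<..Suc M} = insert (Suc M) {s<..M}" using Suc by auto
  then have "(\<Sum>n\<in>{s<..Suc M}. 1 / real n ^ 2) = 1 / real (Suc M) ^ 2 + (\<Sum>n\<in>{s<..M}. 1 / real n ^ 2)"
    by simp
  also have "\<dots> \<le> 1 / real (Suc M) ^ 2 + (1 / real s - 1 / real M)" using Suc by simp
  also have "1 / real (Suc M) ^ 2 \<le> 1 / real M - 1 / real (Suc M)"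
  proof -
    have m0: "real M > 0" using M1 by simp
    have "1 / real M - 1 / real (Suc M) = 1 / (real M * real (Suc M))" using m0 by (simp add: field_simps)
    moreover have "real M * real (Suc M) \<le> real (Suc M) ^ 2" by (simp add: power2_eq_square)
    then have "1 / real (Suc M) ^ 2 \<le> 1 / (real M * real (Suc M))"
      using m0 by (intro divide_left_mono) auto
    ultimately show ?thesis by simp
  qed
  finally show ?case by simp
qed

lemma inv_sq_sum:
  fixes Q :: "nat set" and s :: nat
  assumes fQ: "finite Q" and Qs: "\<And>n. n \<in> Q \<Longrightarrow> n > s" and s: "s \<ge> 1"
  shows "(\<Sum>n\<in>Q. 1 / real n ^ 2) \<le> 1 / real s"
proof (cases "Q = {}")
  case True then show ?thesis by simp
next
  case False
  define M where "M = Max Q"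
  have QM: "Q \<subseteq> {s<..M}" using Qs fQ unfolding M_def by (auto intro: Max_ge)
  have Ms: "M \<ge> s" using False Qs fQ unfolding M_def by (metis Max_in less_imp_le)
  have "(\<Sum>n\<in>Q. 1 / real n ^ 2) \<le> (\<Sum>n\<in>{s<..M}. 1 / real n ^ 2)"
    by (rule sum_mono2[OF _ QM]) auto
  also have "\<dots> \<le> 1 / real s - 1 / real M" by (rule inv_sq_tel[OF s Ms])
  also have "\<dots> \<le> 1 / real s" by simp
  finally show ?thesis .
qed

lemma min_sum_bound:
  fixes Q :: "nat set" and y :: real
  assumes fQ: "finite Q" and Q1: "\<And>n. n \<in> Q \<Longrightarrow> n \<ge> 1" and y: "y \<ge> 4"
  shows "(\<Sum>n\<in>Q. min (1 / y) (1 / real n ^ 2)) \<le> 3 / sqrt y"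
proof -
  define s where "s = nat \<lfloor>sqrt y\<rfloor>"
  have sy: "sqrt y \<ge> 2" using y by (metis real_sqrt_four real_sqrt_le_iff)
  have s1: "real s \<le> sqrt y" "sqrt y - 1 < real s" unfolding s_def using sy by linarith+
  have s2: "s \<ge> 1" using s1 sy by linarith
  have ss: "real s \<ge> sqrt y / 2" using s1 sy by linarith
  define Q1 where "Q1 = {n\<in>Q. n \<le> s}"
  define Q2 where "Q2 = {n\<in>Q. n > s}"
  have split: "(\<Sum>n\<in>Q. min (1 / y) (1 / real n ^ 2)) = (\<Sum>n\<in>Q1. min (1 / y) (1 / real n ^ 2)) + (\<Sum>n\<in>Q2. min (1 / y) (1 / real n ^ 2))"
  proof -
    have "Q = Q1 \<union> Q2" "Q1 \<inter> Q2 = {}" unfolding Q1_def Q2_def by auto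
    moreover have "finite Q1" "finite Q2" using fQ unfolding Q1_def Q2_def by auto
    ultimately show ?thesis by (metis sum.union_disjoint)
  qed
  have b1: "(\<Sum>n\<in>Q1. min (1 / y) (1 / real n ^ 2)) \<le> 1 / sqrt y"
  proof -
    have "(\<Sum>n\<in>Q1. min (1 / y) (1 / real n ^ 2)) \<le> (\<Sum>n\<in>Q1. 1 / y)" by (intro sum_mono) auto
    also have "\<dots> = real (card Q1) / y" by simp
    also have "card Q1 \<le> card {1..s}" using Q1 unfolding Q1_def by (intro card_mono) auto
    then have "real (card Q1) \<le> real s" by simp
    then have "real (card Q1) / y \<le> sqrt y / y" using s1 y by (intro divide_right_mono) auto
    also have "sqrt y / y = 1 / sqrt y"
    proof -
      have yy: "sqrt y * sqrt y = y" using y by simp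
      have sp: "sqrt y > 0" using sy by linarith
      have "sqrt y / y = sqrt y / (sqrt y * sqrt y)" by (simp only: yy)
      also have "\<dots> = 1 / sqrt y" using sp by (intro nonzero_divide_mult_cancel_left) simp
      finally show ?thesis .
    qed
    finally show ?thesis .
  qed
  have b2: "(\<Sum>n\<in>Q2. min (1 / y) (1 / real n ^ 2)) \<le> 2 / sqrt y"
  proof -
    have "(\<Sum>n\<in>Q2. min (1 / y) (1 / real n ^ 2)) \<le> (\<Sum>n\<in>Q2. 1 / real n ^ 2)" by (intro sum_mono) auto
    also have "\<dots> \<le> 1 / real s" by (rule inv_sq_sum) (use fQ s2 in \<open>auto simp: Q2_def\<close>)
    also have "\<dots> \<le> 1 / (sqrt y / 2)" using ss sy s2 y by (intro divide_left_mono mult_pos_pos) auto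
    also have "\<dots> = 2 / sqrt y" by simp
    finally show ?thesis .
  qed
  show ?thesis using split b1 b2 by simp
qed

lemma sqrt_ln: "y \<ge> 1 \<Longrightarrow> 1 / sqrt y \<le> 2 / ln y \<or> ln y = 0"
proof -
  assume y: "y \<ge> 1"
  have sy: "sqrt y > 0" using y by simp
  have "ln (sqrt y) \<le> sqrt y - 1" by (rule ln_le_minus_one[OF sy])
  then have "ln y \<le> 2 * sqrt y" using y by (simp add: ln_sqrt)
  moreover have "ln y \<ge> 0" using y by simp
  show ?thesis
  proof (cases "ln y = 0")
    case False
    then have lp: "ln y > 0" using \<open>ln y \<ge> 0\<close> by simp
    have "1 / sqrt y \<le> 2 / ln y \<longleftrightarrow> ln y \<le> 2 * sqrt y" using lp sy by (simp add: field_simps)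
    then show ?thesis using \<open>ln y \<le> 2 * sqrt y\<close> by simp
  qed simp
qed

definition Wb :: "nat \<Rightarrow> nat \<Rightarrow> (nat \<Rightarrow> nat \<Rightarrow> nat) \<Rightarrow> nat" where
  "Wb k l \<alpha> = (\<Sum>i<k. \<Sum>j<k. \<Sum>r\<le>l. \<Sum>s\<le>l. \<alpha> i r * \<alpha> j s)"

lemma Wb_ge:
  assumes "i < k" "j < k" "r \<le> l" "s \<le> l"
  shows "\<alpha> i r * \<alpha> j s \<le> Wb k l \<alpha>"
proof -
  have "\<alpha> i r * \<alpha> j s \<le> (\<Sum>s\<le>l. \<alpha> i r * \<alpha> j s)" using assms by (intro member_le_sum) auto
  also have "\<dots> \<le> (\<Sum>r\<le>l. \<Sum>s\<le>l. \<alpha> i r * \<alpha> j s)"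
    using assms by (intro member_le_sum[where f = "\<lambda>r. \<Sum>s\<le>l. \<alpha> i r * \<alpha> j s"]) auto
  also have "\<dots> \<le> (\<Sum>j<k. \<Sum>r\<le>l. \<Sum>s\<le>l. \<alpha> i r * \<alpha> j s)"
    using assms by (intro member_le_sum[where f = "\<lambda>j. \<Sum>r\<le>l. \<Sum>s\<le>l. \<alpha> i r * \<alpha> j s"]) auto
  also have "\<dots> \<le> Wb k l \<alpha>" unfolding Wb_def
    using assms by (intro member_le_sum[where f = "\<lambda>i. \<Sum>j<k. \<Sum>r\<le>l. \<Sum>s\<le>l. \<alpha> i r * \<alpha> j s"]) auto
  finally show ?thesis .
qed

lemma not_dvd_small:
  fixes p :: nat and a b :: nat
  assumes "a \<le> W" "b \<le> W" "W < p" "int a - int b \<noteq> 0"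
  shows "\<not> int p dvd int a - int b"
proof
  assume "int p dvd int a - int b"
  then have "\<bar>int p\<bar> \<le> \<bar>int a - int b\<bar>" by (rule dvd_imp_le_int[OF assms(4)])
  then show False using assms(1-3) by linarith
qed

lemma nd_from_primitive:
  assumes prim: "primitive_system k l \<alpha>" and j: "j < k" and p: "prime p"
  shows "\<exists>r0\<in>{1..l}. \<not> p dvd \<alpha> j r0"
proof (rule ccontr)
  assume "\<not> ?thesis"
  then have "\<forall>r\<in>{1..l}. p dvd \<alpha> j r" by blast
  then have "p dvd Gcd (\<alpha> j ` {1..l})" by (intro Gcd_greatest) auto
  moreover have "Gcd (\<alpha> j ` {1..l}) = 1" using prim j unfolding primitive_system_def by blast
  ultimately show False using p by simp
qed

lemma pair_from_primitive:
  assumes prim: "primitive_system k l \<alpha>" and i: "i < k" and j: "j < k" and ij: "i \<noteq> j"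
    and p: "prime p" and pW: "Wb k l \<alpha> < p" and N: "N \<ge> 1"
  shows "real (card {n\<in>box l N. p dvd eval_form \<alpha> l i n \<and> p dvd eval_form \<alpha> l j n})
        \<le> (1 / real p ^ 2) * real N ^ l + 3 * real N ^ (l - 1)"
proof (cases "\<exists>r\<in>{1..l}. \<exists>s\<in>{1..l}. \<alpha> i r * \<alpha> j s \<noteq> \<alpha> i s * \<alpha> j r")
  case True
  then obtain r s where rs: "r \<in> {1..l}" "s \<in> {1..l}" "\<alpha> i r * \<alpha> j s \<noteq> \<alpha> i s * \<alpha> j r" by blast
  have rs': "r \<noteq> s" using rs by auto
  have l2: "l \<ge> 2" using rs rs' by auto
  have ne: "int (\<alpha> i r * \<alpha> j s) \<noteq> int (\<alpha> i s * \<alpha> j r)" using rs(3) by (metis of_nat_eq_iff)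
  then have ne': "int (\<alpha> i r * \<alpha> j s) - int (\<alpha> i s * \<alpha> j r) \<noteq> 0" by simp
  have "\<not> int p dvd int (\<alpha> i r * \<alpha> j s) - int (\<alpha> i s * \<alpha> j r)"
    by (rule not_dvd_small[OF Wb_ge Wb_ge pW ne']) (use i j rs in auto)
  then have D: "\<not> int p dvd int (\<alpha> i r) * int (\<alpha> j s) - int (\<alpha> i s) * int (\<alpha> j r)" by simp
  have p2: "p \<ge> 2" using p by (simp add: prime_ge_2_nat)
  show ?thesis by (rule C2_real[OF N l2 p2 C2_upper[OF rs(1,2) p D]])
next
  case False
  then have minors: "\<And>r s. r \<in> {1..l} \<Longrightarrow> s \<in> {1..l} \<Longrightarrow> \<alpha> i r * \<alpha> j s = \<alpha> i s * \<alpha> j r" by blast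
  have "Gcd (\<alpha> i ` {1..l}) = 1" using prim i unfolding primitive_system_def by blast
  then have "\<not> \<alpha> i ` {1..l} \<subseteq> {0}" by (metis Gcd_0_iff zero_neq_one)
  then obtain r where r: "r \<in> {1..l}" "\<alpha> i r \<noteq> 0" by blast
  have rel: "\<forall>s\<in>{1..l}. \<alpha> j r * \<alpha> i s = \<alpha> i r * \<alpha> j s"
    using minors[OF r(1)] by (simp add: mult.commute)
  have D0: "int (\<alpha> j r * \<alpha> i 0) - int (\<alpha> i r * \<alpha> j 0) \<noteq> 0"
  proof
    assume D00: "int (\<alpha> j r * \<alpha> i 0) - int (\<alpha> i r * \<alpha> j 0) = 0"
    have "\<forall>r'\<in>{0..l}. real (\<alpha> j r) * real (\<alpha> i r') + (- real (\<alpha> i r)) * real (\<alpha> j r') = 0"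
    proof
      fix r' assume r': "r' \<in> {0..l}"
      show "real (\<alpha> j r) * real (\<alpha> i r') + (- real (\<alpha> i r)) * real (\<alpha> j r') = 0"
      proof (cases "r' = 0")
        case True
        have "int (\<alpha> j r * \<alpha> i 0) = int (\<alpha> i r * \<alpha> j 0)" using D00 by linarith
        then have "\<alpha> j r * \<alpha> i r' = \<alpha> i r * \<alpha> j r'" using True by (simp only: of_nat_eq_iff)
        then have "real (\<alpha> j r * \<alpha> i r') = real (\<alpha> i r * \<alpha> j r')" by simp
        then show ?thesis by simp
      next
        case False
        then have "r' \<in> {1..l}" using r' by auto
        then have "\<alpha> j r * \<alpha> i r' = \<alpha> i r * \<alpha> j r'" using rel by blast
        then have "real (\<alpha> j r * \<alpha> i r') = real (\<alpha> i r * \<alpha> j r')" by simp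
        then show ?thesis by simp
      qed
    qed
    then have "- real (\<alpha> i r) = 0" using prim i j ij unfolding primitive_system_def by blast
    then show False using r(2) by simp
  qed
  have "\<not> int p dvd int (\<alpha> j r * \<alpha> i 0) - int (\<alpha> i r * \<alpha> j 0)"
    by (rule not_dvd_small[OF Wb_ge Wb_ge pW D0]) (use i j r in auto)
  then have "\<not> int p dvd int (\<alpha> j r) * int (\<alpha> i 0) - int (\<alpha> i r) * int (\<alpha> j 0)" by simp
  then have emp: "{n\<in>box l N. p dvd eval_form \<alpha> l i n \<and> p dvd eval_form \<alpha> l j n} = {}"
    by (rule C2_zero[OF r(1) rel])
  show ?thesis unfolding emp by simp
qed

lemma avg_one_lim_any: "(avg l (\<lambda>n. 1) \<longlongrightarrow> 1) at_top"
proof (cases "l = 0")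
  case True
  have "eventually (\<lambda>x. avg l (\<lambda>n. 1) x = 1) at_top"
    using eventually_gt_at_top[of 0]
  proof eventually_elim
    case (elim x)
    then show ?case using True by (simp add: avg_def card_box)
  qed
  then have ev': "eventually (\<lambda>x. 1 = avg l (\<lambda>n. 1) x) at_top" by eventually_elim simp
  show ?thesis by (rule Lim_transform_eventually[OF tendsto_const ev'])
next
  case False
  then show ?thesis by (intro avg_one_lim) auto
qed

lemma Mp_k0: "M_p 0 l f \<alpha> p = 1"
proof -
  have e: "(\<lambda>x. complex_of_real (x powr (- real l)) *
      (\<Sum>n\<in>PiE {1..l} (\<lambda>_. {1..nat \<lfloor>x\<rfloor>}). \<Prod>j<0. local_part (f j) p (eval_form \<alpha> l j n))) = avg l (\<lambda>n. 1)"
    by (rule ext) (simp add: avg_def box_def)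
  have "M_p 0 l f \<alpha> p = Lim at_top (avg l (\<lambda>n. 1))" unfolding M_p_def e ..
  also have "\<dots> = 1" by (rule tendsto_Lim[OF trivial_limit_at_top_linorder avg_one_lim_any])
  finally show ?thesis .
qed

lemma Mp_factor:
  assumes prim: "primitive_system k l \<alpha>" and p: "prime p" and pW: "Wb k l \<alpha> < p" and p8: "8 * k \<le> p"
    and fb: "\<And>j \<mu>. j < k \<Longrightarrow> norm (f j (p ^ \<mu>)) \<le> 1"
    and f1: "\<And>j. j < k \<Longrightarrow> f j 1 = 1"
  shows "norm ((\<Prod>j<k. efac (f j) p) - 1) \<le> 1 / 2"
    "norm (M_p k l f \<alpha> p / (\<Prod>j<k. efac (f j) p) - 1) \<le> 16 * (real k + 1) ^ 3 / real p ^ 2"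
proof -
  have nd: "\<And>j. j < k \<Longrightarrow> \<exists>r0\<in>{1..l}. \<not> p dvd \<alpha> j r0" using nd_from_primitive[OF prim _ p] by blast
  interpret mp_ctx p k l \<alpha> f by unfold_locales (use p fb f1 nd in auto)
  have p0: "real p > 0" using p2 by simp
  define a where "a = (\<Prod>j<k. efac (f j) p)"
  have es: "(\<Sum>j<k. norm (efac (f j) p - 1)) \<le> real k * (2 / real p)"
  proof -
    have "(\<Sum>j<k. norm (efac (f j) p - 1)) \<le> (\<Sum>j<k. 2 / real p)"
      by (intro sum_mono efac_props(2)[OF p2]) (use fb in auto)
    then show ?thesis by simp
  qed
  have es1: "real k * (2 / real p) \<le> 1 / 4" using p8 p0 by (simp add: field_simps)
  have "norm ((\<Prod>j<k. 1 + (efac (f j) p - 1)) - 1) \<le> 2 * (\<Sum>j<k. norm (efac (f j) p - 1))"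
    by (rule prod_first_order) (use es es1 in auto)
  then have a1: "norm (a - 1) \<le> 1 / 2" unfolding a_def using es es1 by simp
  then show "norm ((\<Prod>j<k. efac (f j) p) - 1) \<le> 1 / 2" unfolding a_def .
  have an: "norm a \<ge> 1 / 2"
  proof -
    have "norm (a - (a - 1)) \<le> norm a + norm (a - 1)" by (rule norm_triangle_ineq4)
    then have "norm (1::complex) \<le> norm a + norm (a - 1)" by simp
    then show ?thesis using a1 by simp
  qed
  then have a0: "a \<noteq> 0" by auto
  have Ma: "norm (M_p k l f \<alpha> p - a) \<le> 8 * (real k + 1) ^ 3 / real p ^ 2"
  proof (cases "k = 0")
    case True
    then have "M_p k l f \<alpha> p = a" unfolding a_def using Mp_k0 by simp
    then show ?thesis by simp
  next
    case False
    show ?thesis unfolding a_def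
    proof (rule Mp_est)
      fix i j N :: nat assume "i < k" "j < k" "i \<noteq> j" "N \<ge> 1"
      then show "real (card {n\<in>box l N. p dvd eval_form \<alpha> l i n \<and> p dvd eval_form \<alpha> l j n})
        \<le> (1 / real p ^ 2) * real N ^ l + 3 * real N ^ (l - 1)"
        by (intro pair_from_primitive[OF prim _ _ _ p pW])
    qed (use p8 False in auto)
  qed
  have "M_p k l f \<alpha> p / a - 1 = (M_p k l f \<alpha> p - a) / a" using a0 by (simp add: diff_divide_distrib)
  then have "norm (M_p k l f \<alpha> p / a - 1) = norm (M_p k l f \<alpha> p - a) / norm a" by (simp add: norm_divide)
  also have "\<dots> \<le> (8 * (real k + 1) ^ 3 / real p ^ 2) / (1 / 2)"
    using Ma an by (intro frac_le) auto
  also have "\<dots> = 16 * (real k + 1) ^ 3 / real p ^ 2" by simp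
  finally show "norm (M_p k l f \<alpha> p / (\<Prod>j<k. efac (f j) p) - 1) \<le> 16 * (real k + 1) ^ 3 / real p ^ 2"
    unfolding a_def .
qed

lemma small_p_bound:
  fixes g :: "nat \<Rightarrow> complex"
  assumes p: "prime p" and py: "real p \<le> y" and gb: "\<And>\<mu>. norm (g (p ^ \<mu>)) \<le> 1"
    and g1: "\<And>\<mu>. \<mu> \<ge> 1 \<Longrightarrow> real (p ^ \<mu>) \<le> y \<Longrightarrow> g (p ^ \<mu>) = 1"
  shows "norm (efac g p - 1) \<le> 4 * min (1 / y) (1 / real p ^ 2)"
proof -
  have p2: "p \<ge> 2" using p by (simp add: prime_ge_2_nat)
  have y2: "y \<ge> 2" using py p2 by linarith
  have b1: "norm (efac g p - 1) \<le> 4 / real p ^ 2"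
  proof (rule efac_small[of p g, OF p2 gb])
    fix \<mu> :: nat assume "1 \<le> \<mu>" "\<mu> < 2"
    then have "\<mu> = 1" by simp
    then show "g (p ^ \<mu>) = 1" using g1[of 1] py by simp
  qed simp
  have ex: "\<exists>m. y < real p ^ m" using p2 by (intro real_arch_pow) simp
  define m where "m = (LEAST m. y < real p ^ m)"
  have m1: "y < real p ^ m" unfolding m_def by (rule LeastI_ex[OF ex])
  have m2: "\<not> y < real p ^ \<mu>" if "\<mu> < m" for \<mu> using that unfolding m_def by (rule not_less_Least)
  have m0: "m \<ge> 1"
  proof (rule ccontr)
    assume "\<not> m \<ge> 1"
    then have "m = 0" by simp
    then show False using m1 y2 by simp
  qed
  have b2: "norm (efac g p - 1) \<le> 4 / real p ^ m"
  proof (rule efac_small[of p g m, OF p2 gb m0])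
    fix \<mu> :: nat assume "1 \<le> \<mu>" "\<mu> < m"
    then show "g (p ^ \<mu>) = 1" using g1[of \<mu>] m2[of \<mu>] by simp
  qed
  have "4 / real p ^ m \<le> 4 / y" using m1 y2 p2 by (intro divide_left_mono mult_pos_pos) auto
  then show ?thesis using b1 b2 by (simp add: min_def)
qed

theorem lemma2p4:
  fixes k :: nat
  shows "\<exists>C::real. \<forall>(l::nat) (\<alpha>::nat \<Rightarrow> nat \<Rightarrow> nat). primitive_system k l \<alpha> \<longrightarrow>
    (\<forall>\<epsilon>>0. \<exists>y0::real. \<forall>(y::real) (X::real) (f::nat \<Rightarrow> nat \<Rightarrow> complex).
       y \<ge> y0 \<longrightarrow> y \<ge> 2 \<longrightarrow> X \<ge> y \<longrightarrow>
       (\<forall>j<k. multiplicative (f j) \<and> one_bounded (f j) \<and>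
          (\<forall>p \<mu>. prime p \<longrightarrow> \<mu> \<ge> 1 \<longrightarrow> real (p ^ \<mu>) \<le> y \<longrightarrow> f j (p ^ \<mu>) = 1)) \<longrightarrow>
       (\<exists>\<theta> E :: complex. norm \<theta> \<le> C / ln y \<and> norm E \<le> y powr (-1 + \<epsilon>) \<and>
          (\<Prod>p\<in>{p. prime p \<and> y < real p \<and> real p \<le> X}. M_p k l f \<alpha> p)
            = (1 + \<theta>) * ((\<Prod>j<k. Pfrak (f j) X) + E)))"
proof -
  define K :: real where "K = 16 * (real k + 1) ^ 3"
  define C :: real where "C = 16 * K + 96 * real k"
  have K0: "K \<ge> 0" unfolding K_def by simp
  show ?thesis
  proof (rule exI[of _ C], intro allI impI)
    fix l :: nat and \<alpha> :: "nat \<Rightarrow> nat \<Rightarrow> nat" and \<epsilon> :: real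
    assume prim: "primitive_system k l \<alpha>" and "\<epsilon> > 0"
    define y0 :: real where "y0 = max (max 4 (8 * real k)) (max (2 * K) (max ((48 * real k + 1) ^ 2) (real (Wb k l \<alpha>) + 1)))"
    show "\<exists>y0::real. \<forall>(y::real) (X::real) (f::nat \<Rightarrow> nat \<Rightarrow> complex).
       y \<ge> y0 \<longrightarrow> y \<ge> 2 \<longrightarrow> X \<ge> y \<longrightarrow>
       (\<forall>j<k. multiplicative (f j) \<and> one_bounded (f j) \<and>
          (\<forall>p \<mu>. prime p \<longrightarrow> \<mu> \<ge> 1 \<longrightarrow> real (p ^ \<mu>) \<le> y \<longrightarrow> f j (p ^ \<mu>) = 1)) \<longrightarrow>
       (\<exists>\<theta> E :: complex. norm \<theta> \<le> C / ln y \<and> norm E \<le> y powr (-1 + \<epsilon>) \<and>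
          (\<Prod>p\<in>{p. prime p \<and> y < real p \<and> real p \<le> X}. M_p k l f \<alpha> p)
            = (1 + \<theta>) * ((\<Prod>j<k. Pfrak (f j) X) + E))"
    proof (rule exI[of _ y0], intro allI impI)
      fix y X :: real and f :: "nat \<Rightarrow> nat \<Rightarrow> complex"
      assume yy0: "y \<ge> y0" and "y \<ge> 2" and Xy: "X \<ge> y"
        and fh: "\<forall>j<k. multiplicative (f j) \<and> one_bounded (f j) \<and>
          (\<forall>p \<mu>. prime p \<longrightarrow> \<mu> \<ge> 1 \<longrightarrow> real (p ^ \<mu>) \<le> y \<longrightarrow> f j (p ^ \<mu>) = 1)"
      have y4: "y \<ge> 4" and y8: "y \<ge> 8 * real k" and yK: "y \<ge> 2 * K"
        and y48: "y \<ge> (48 * real k + 1) ^ 2" and yW: "y \<ge> real (Wb k l \<alpha>) + 1"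
        using yy0 unfolding y0_def by auto
      have sy: "sqrt y \<ge> 48 * real k + 1"
        using y48 by (metis real_sqrt_abs real_sqrt_le_iff abs_of_nonneg of_nat_0_le_iff
            add_nonneg_nonneg mult_nonneg_nonneg zero_le_numeral zero_le_one)
      have sy0: "sqrt y > 0" using y4 by simp
      have fb: "norm (f j (p ^ \<mu>)) \<le> 1" if "j < k" "p > 0" for j \<mu> p
      proof -
        have "p ^ \<mu> \<ge> 1" using that(2) by simp
        then show ?thesis using fh that(1) unfolding one_bounded_def by blast
      qed
      have f1: "\<And>j. j < k \<Longrightarrow> f j 1 = 1" using fh unfolding multiplicative_def by blast
      have fsm: "\<And>j p \<mu>. j < k \<Longrightarrow> prime p \<Longrightarrow> \<mu> \<ge> 1 \<Longrightarrow> real (p ^ \<mu>) \<le> y \<Longrightarrow> f j (p ^ \<mu>) = 1"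
        using fh by blast
      define T where "T = {p. prime p \<and> real p \<le> X}"
      define Q where "Q = {p. prime p \<and> real p \<le> y}"
      define P where "P = {p. prime p \<and> y < real p \<and> real p \<le> X}"
      define a where "a p = (\<Prod>j<k. efac (f j) p)" for p
      have fT: "finite T" unfolding T_def by (rule finite_subset[of _ "{..nat \<lfloor>X\<rfloor>}"]) (auto intro: le_nat_floor)
      have TQP: "T = Q \<union> P" "Q \<inter> P = {}" unfolding T_def Q_def P_def using Xy by auto
      have fQ: "finite Q" and fP: "finite P" using fT TQP by auto
      have Pf: "(\<Prod>j<k. Pfrak (f j) X) = (\<Prod>p\<in>Q. a p) * (\<Prod>p\<in>P. a p)"
      proof -
        have "(\<Prod>j<k. Pfrak (f j) X) = (\<Prod>j<k. \<Prod>p\<in>T. efac (f j) p)"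
          unfolding Pfrak_def efac_def T_def ..
        also have "\<dots> = (\<Prod>p\<in>T. a p)" unfolding a_def by (rule prod.swap)
        also have "\<dots> = (\<Prod>p\<in>Q. a p) * (\<Prod>p\<in>P. a p)"
          unfolding TQP(1) by (rule prod.union_disjoint[OF fQ fP TQP(2)])
        finally show ?thesis .
      qed
      have Pprops: "norm (a p - 1) \<le> 1 / 2 \<and> norm (M_p k l f \<alpha> p / a p - 1) \<le> K / real p ^ 2" if pP: "p \<in> P" for p
      proof -
        have pr: "prime p" and py: "y < real p" using pP unfolding P_def by auto
        have pW: "Wb k l \<alpha> < p" using py yW by linarith
        have p8: "8 * k \<le> p" using py y8 by linarith
        have p0: "p > 0" using pr by (simp add: prime_gt_0_nat)
        show ?thesis
          using Mp_factor[of k l \<alpha> p f, OF prim pr pW p8 fb[OF _ p0] f1] unfolding a_def K_def by blast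
      qed
      define \<delta> where "\<delta> p = M_p k l f \<alpha> p / a p - 1" for p
      have a0: "a p \<noteq> 0" if "p \<in> P" for p
      proof
        assume "a p = 0"
        then show False using Pprops[OF that] by simp
      qed
      have LHS: "(\<Prod>p\<in>P. M_p k l f \<alpha> p) = (\<Prod>p\<in>P. a p) * (\<Prod>p\<in>P. 1 + \<delta> p)"
      proof -
        have "(\<Prod>p\<in>P. M_p k l f \<alpha> p) = (\<Prod>p\<in>P. a p * (1 + \<delta> p))"
          by (intro prod.cong refl) (use a0 in \<open>simp add: \<delta>_def\<close>)
        then show ?thesis by (simp add: prod.distrib)
      qed
      define A where "A = (\<Prod>p\<in>P. 1 + \<delta> p)"
      define B where "B = (\<Prod>p\<in>Q. a p)"
      define s where "s = nat \<lfloor>y\<rfloor>"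
      have s1: "s \<ge> 1" "real s > y - 1" "real s \<le> y" unfolding s_def using y4 by linarith+
      have ds: "(\<Sum>p\<in>P. norm (\<delta> p)) \<le> 2 * K / y"
      proof -
        have "(\<Sum>p\<in>P. norm (\<delta> p)) \<le> (\<Sum>p\<in>P. K * (1 / real p ^ 2))"
          using Pprops unfolding \<delta>_def by (intro sum_mono) auto
        also have "\<dots> = K * (\<Sum>p\<in>P. 1 / real p ^ 2)" by (simp add: sum_distrib_left)
        also have "\<dots> \<le> K * (1 / real s)"
        proof (intro mult_left_mono inv_sq_sum[OF fP] K0 s1(1))
          fix n assume "n \<in> P"
          then have "real n > y" unfolding P_def by auto
          then show "n > s" using s1 by linarith
        qed
        also have "\<dots> \<le> K * (2 / y)"
        proof (intro mult_left_mono K0)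
          have "y / 2 \<le> real s" using s1 y4 by linarith
          then show "1 / real s \<le> 2 / y" using s1 y4 by (simp add: field_simps)
        qed
        finally show ?thesis by (simp add: mult.commute)
      qed
      have ds1: "2 * K / y \<le> 1" using yK y4 by (simp add: field_simps)
      have A1: "norm (A - 1) \<le> 4 * K / sqrt y"
      proof -
        have "norm (A - 1) \<le> 2 * (\<Sum>p\<in>P. norm (\<delta> p))" unfolding A_def
          by (rule prod_first_order[OF fP]) (use ds ds1 in linarith)
        also have "\<dots> \<le> 2 * (2 * K / y)" using ds by simp
        also have "2 * K / y \<le> 2 * K / sqrt y"
        proof (rule divide_left_mono)
          have s1: "sqrt y \<ge> 1" using y4 by simp
          then have "sqrt y * 1 \<le> sqrt y * sqrt y" by (intro mult_left_mono) auto
          moreover have "sqrt y * sqrt y = y" using y4 by simp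
          ultimately show "sqrt y \<le> y" by simp
        qed (use K0 sy0 y4 in auto)
        finally show ?thesis by simp
      qed
      have zb: "norm (efac (f j) p - 1) \<le> 4 * min (1 / y) (1 / real p ^ 2)" if "p \<in> Q" "j < k" for p j
      proof -
        have pr: "prime p" and py: "real p \<le> y" using that unfolding Q_def by auto
        have p0: "p > 0" using pr by (simp add: prime_gt_0_nat)
        show ?thesis by (rule small_p_bound[of p y "f j", OF pr py fb[OF that(2) p0] fsm[OF that(2) pr]])
      qed
      have Bs: "(\<Sum>pj\<in>Q \<times> {..<k}. norm (efac (f (snd pj)) (fst pj) - 1)) \<le> 12 * real k / sqrt y"
      proof -
        have "(\<Sum>pj\<in>Q \<times> {..<k}. norm (efac (f (snd pj)) (fst pj) - 1)) = (\<Sum>p\<in>Q. \<Sum>j<k. norm (efac (f j) p - 1))"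
          by (simp add: sum.cartesian_product case_prod_beta)
        also have "\<dots> \<le> (\<Sum>p\<in>Q. \<Sum>j<k. 4 * min (1 / y) (1 / real p ^ 2))"
          using zb by (intro sum_mono) auto
        also have "\<dots> = 4 * real k * (\<Sum>p\<in>Q. min (1 / y) (1 / real p ^ 2))"
          by (simp add: sum_distrib_left mult.assoc mult.left_commute)
        also have "\<dots> \<le> 4 * real k * (3 / sqrt y)"
        proof (intro mult_left_mono min_sum_bound[OF fQ _ y4])
          fix n assume "n \<in> Q" then show "n \<ge> 1" unfolding Q_def by (auto simp: prime_gt_0_nat Suc_le_eq)
        qed simp
        finally show ?thesis by simp
      qed
      have Bs1: "12 * real k / sqrt y \<le> 1 / 4"
      proof -
        have "48 * real k \<le> sqrt y" using sy by linarith
        then show ?thesis using sy0 by (simp add: field_simps)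
      qed
      have B1: "norm (B - 1) \<le> 24 * real k / sqrt y"
      proof -
        have "B = (\<Prod>pj\<in>Q \<times> {..<k}. 1 + (efac (f (snd pj)) (fst pj) - 1))"
          unfolding B_def a_def by (simp add: prod.cartesian_product case_prod_beta)
        then have "norm (B - 1) \<le> 2 * (\<Sum>pj\<in>Q \<times> {..<k}. norm (efac (f (snd pj)) (fst pj) - 1))"
          using prod_first_order[of "Q \<times> {..<k}" "\<lambda>pj. efac (f (snd pj)) (fst pj) - 1"] fQ Bs Bs1 by simp
        then show ?thesis using Bs by simp
      qed
      have B12: "norm (B - 1) \<le> 1 / 2" using B1 Bs1 by simp
      have Bn: "norm B \<ge> 1 / 2"
      proof -
        have "norm (B - (B - 1)) \<le> norm B + norm (B - 1)" by (rule norm_triangle_ineq4)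
        then show ?thesis using B12 by simp
      qed
      then have B0: "B \<noteq> 0" by auto
      define \<theta> where "\<theta> = A / B - 1"
      show "\<exists>\<theta> E :: complex. norm \<theta> \<le> C / ln y \<and> norm E \<le> y powr (-1 + \<epsilon>) \<and>
          (\<Prod>p\<in>{p. prime p \<and> y < real p \<and> real p \<le> X}. M_p k l f \<alpha> p)
            = (1 + \<theta>) * ((\<Prod>j<k. Pfrak (f j) X) + E)"
      proof (intro exI conjI)
        show "norm (0::complex) \<le> y powr (-1 + \<epsilon>)" by simp
        show "(\<Prod>p\<in>{p. prime p \<and> y < real p \<and> real p \<le> X}. M_p k l f \<alpha> p) = (1 + \<theta>) * ((\<Prod>j<k. Pfrak (f j) X) + 0)"
          unfolding P_def[symmetric] LHS Pf \<theta>_def A_def[symmetric] B_def[symmetric] using B0 by (simp add: field_simps)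
        have "\<theta> = (A - B) / B" unfolding \<theta>_def using B0 by (simp add: field_simps)
        then have "norm \<theta> = norm (A - B) / norm B" by (simp add: norm_divide)
        also have "\<dots> \<le> (4 * K / sqrt y + 24 * real k / sqrt y) / (1 / 2)"
        proof (rule frac_le)
          have "norm (A - B) \<le> norm (A - 1) + norm (B - 1)"
            using norm_triangle_ineq4[of "A - 1" "B - 1"] by simp
          then show "norm (A - B) \<le> 4 * K / sqrt y + 24 * real k / sqrt y" using A1 B1 by linarith
        qed (use Bn K0 sy0 in auto)
        also have "\<dots> = (8 * K + 48 * real k) * (1 / sqrt y)" using sy0 by (simp add: field_simps)
        also have "\<dots> \<le> (8 * K + 48 * real k) * (2 / ln y)"
        proof (rule mult_left_mono)
          have "ln y > 0" using y4 by simp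
          then show "1 / sqrt y \<le> 2 / ln y" using sqrt_ln[of y] y4 by auto
        qed (use K0 in auto)
        also have "\<dots> = C / ln y" unfolding C_def by (simp add: field_simps)
        finally show "norm \<theta> \<le> C / ln y" .
      qed
    qed
  qed
qed

end
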